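(* Let $\mathfrak{g}$ be a complex simply-laced symmetrizable Kac–Moody algebra with index set $I$, and let $\lambda_1,\lambda_2,\lambda_3,\lambda_4$ be dominant integral weights such that $\lambda_1+\lambda_2=\lambda_3+\lambda_4$ and $|(\lambda_1-\lambda_2)(\alpha^\vee)|\le|(\lambda_3-\lambda_4)(\alpha^\vee)|$ for every positive root $\alpha$. Let $(i_1,\ldots,i_t)\in I^t$ with $i_r\ne i_s$ for $r\ne s$, such that the subdiagram of the Dynkin diagram spanned by the nodes $i_1,\ldots,i_t$ is connected of type $A$, $D$ or $E$. Assume that $f_{i_1}\cdots f_{i_t}\pi_{\lambda_4}$ is a (nonzero) $\lambda_3$-dominant element of $B(\lambda_4)$. Then there exists a permutation $\sigma\in S_t$ such that $f_{i_{\sigma(1)}}\cdots f_{i_{\sigma(t)}}\pi_{\lambda_2}$ is nonzero and $\lambda_1$-dominant.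
   Context: $\alpha^\vee$ denotes the coroot of $\alpha$. $B(\lambda)$ is Kashiwara's crystal of the irreducible integrable highest weight module $V(\lambda)$, with operators $e_i,f_i$ valued in $B(\lambda)\sqcup\{0\}$ and highest weight element $\pi_\lambda$; in a monomial $f_{j_1}\cdots f_{j_t}\pi_\lambda$ the rightmost operator is applied first. An element $\pi\in B(\lambda)$ is $\mu$-dominant if $e_i^{\mu(\alpha_i^\vee)+1}\pi=0$ for all $i\in I$. *)

theory Defs
  imports Complex_Main "HOL-Combinatorics.Permutations"
begin

text \<open>Index set I = the finite type 'i.  A i j = a_ij = alpha_j(alpha_i^vee).
  A simply-laced GCM is symmetric (hence symmetrizable) with off-diagonal entries 0 or -1.\<close>

definition simply_laced_GCM :: "('i \<Rightarrow> 'i \<Rightarrow> int) \<Rightarrow> bool" where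
  "simply_laced_GCM A \<longleftrightarrow>
     (\<forall>i. A i i = 2) \<and> (\<forall>i j. i \<noteq> j \<longrightarrow> A i j \<in> {0, -1}) \<and> (\<forall>i j. A i j = A j i)"

definition dyn_adj :: "('i \<Rightarrow> 'i \<Rightarrow> int) \<Rightarrow> 'i \<Rightarrow> 'i \<Rightarrow> bool" where
  "dyn_adj A i j \<longleftrightarrow> i \<noteq> j \<and> A i j \<noteq> 0"

definition connected_nodes :: "('i \<Rightarrow> 'i \<Rightarrow> int) \<Rightarrow> 'i set \<Rightarrow> bool" where
  "connected_nodes A S \<longleftrightarrow>
     (\<forall>i\<in>S. \<forall>j\<in>S. (\<lambda>x y. x \<in> S \<and> y \<in> S \<and> dyn_adj A x y)\<^sup>*\<^sup>* i j)"

text \<open>Standard Dynkin diagrams on vertices {1..n} (Bourbaki numbering).\<close>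
definition edge_A :: "nat \<Rightarrow> nat \<Rightarrow> nat \<Rightarrow> bool" where
  "edge_A n a b \<longleftrightarrow> a \<in> {1..n} \<and> b \<in> {1..n} \<and> (b = a + 1 \<or> a = b + 1)"

definition edge_D :: "nat \<Rightarrow> nat \<Rightarrow> nat \<Rightarrow> bool" where
  "edge_D n a b \<longleftrightarrow> a \<in> {1..n} \<and> b \<in> {1..n} \<and>
     ((\<exists>k. 1 \<le> k \<and> k \<le> n - 2 \<and> {a, b} = {k, k + 1}) \<or> {a, b} = {n - 2, n})"

definition edge_E :: "nat \<Rightarrow> nat \<Rightarrow> nat \<Rightarrow> bool" where
  "edge_E n a b \<longleftrightarrow> a \<in> {1..n} \<and> b \<in> {1..n} \<and>
     ({a, b} = {1, 3} \<or> {a, b} = {2, 4} \<or> (\<exists>k. 3 \<le> k \<and> k \<le> n - 1 \<and> {a, b} = {k, k + 1}))"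

definition diagram_iso :: "('i \<Rightarrow> 'i \<Rightarrow> int) \<Rightarrow> 'i set \<Rightarrow> nat \<Rightarrow> (nat \<Rightarrow> nat \<Rightarrow> bool) \<Rightarrow> bool" where
  "diagram_iso A S n E \<longleftrightarrow>
     (\<exists>\<phi>. bij_betw \<phi> {1..n} S \<and>
          (\<forall>a\<in>{1..n}. \<forall>b\<in>{1..n}. dyn_adj A (\<phi> a) (\<phi> b) \<longleftrightarrow> E a b))"

definition connected_type_ADE :: "('i \<Rightarrow> 'i \<Rightarrow> int) \<Rightarrow> 'i set \<Rightarrow> bool" where
  "connected_type_ADE A S \<longleftrightarrow> connected_nodes A S \<and>
     (\<exists>n. (n \<ge> 1 \<and> diagram_iso A S n (edge_A n)) \<or>
          (n \<ge> 4 \<and> diagram_iso A S n (edge_D n)) \<or>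
          (n \<in> {6, 7, 8} \<and> diagram_iso A S n (edge_E n)))"

text \<open>Root lattice elements are coordinate vectors w.r.t. the simple roots.\<close>
definition coroot_pair :: "('i::finite \<Rightarrow> 'i \<Rightarrow> int) \<Rightarrow> ('i \<Rightarrow> int) \<Rightarrow> 'i \<Rightarrow> int" where
  "coroot_pair A \<alpha> i = (\<Sum>j\<in>UNIV. \<alpha> j * A i j)"

definition simple_refl :: "('i::finite \<Rightarrow> 'i \<Rightarrow> int) \<Rightarrow> 'i \<Rightarrow> ('i \<Rightarrow> int) \<Rightarrow> ('i \<Rightarrow> int)" where
  "simple_refl A i \<alpha> = (\<lambda>j. \<alpha> j - (if j = i then coroot_pair A \<alpha> i else 0))"

definition simple_root :: "'i \<Rightarrow> ('i \<Rightarrow> int)" where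
  "simple_root i = (\<lambda>j. if j = i then 1 else 0)"

inductive_set W_orbit :: "('i::finite \<Rightarrow> 'i \<Rightarrow> int) \<Rightarrow> ('i \<Rightarrow> int) set \<Rightarrow> ('i \<Rightarrow> int) set"
  for A S where
  base: "\<alpha> \<in> S \<Longrightarrow> \<alpha> \<in> W_orbit A S"
| step: "\<alpha> \<in> W_orbit A S \<Longrightarrow> simple_refl A i \<alpha> \<in> W_orbit A S"

definition imag_fund :: "('i::finite \<Rightarrow> 'i \<Rightarrow> int) \<Rightarrow> ('i \<Rightarrow> int) set" where
  "imag_fund A = {\<alpha>. (\<forall>i. \<alpha> i \<ge> 0) \<and> \<alpha> \<noteq> (\<lambda>_. 0) \<and>
       connected_nodes A {i. \<alpha> i \<noteq> 0} \<and> (\<forall>i. coroot_pair A \<alpha> i \<le> 0)}"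

text \<open>Positive roots = positive real roots (W-orbit of simple roots, nonnegative)
  union positive imaginary roots (W-orbit of K), Kac Prop. 5.1 / Thm. 5.4.\<close>
definition positive_roots :: "('i::finite \<Rightarrow> 'i \<Rightarrow> int) \<Rightarrow> ('i \<Rightarrow> int) set" where
  "positive_roots A = {\<alpha> \<in> W_orbit A (range simple_root). \<forall>i. \<alpha> i \<ge> 0} \<union> W_orbit A (imag_fund A)"

text \<open>Integral weights are recorded by their values lambda(alpha_i^vee).
  For alpha = sum c_i alpha_i (simply laced), alpha^vee = sum c_i alpha_i^vee.\<close>
definition wt_coroot :: "('i::finite \<Rightarrow> int) \<Rightarrow> ('i \<Rightarrow> int) \<Rightarrow> int" where
  "wt_coroot w \<alpha> = (\<Sum>i\<in>UNIV. \<alpha> i * w i)"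

definition dominant_integral :: "('i \<Rightarrow> int) \<Rightarrow> bool" where
  "dominant_integral w \<longleftrightarrow> (\<forall>i. w i \<ge> 0)"

text \<open>A path t |-> pi(t) is recorded via the coordinates pi(t)(alpha_i^vee).\<close>
type_synonym 'i lpath = "real \<Rightarrow> 'i \<Rightarrow> real"

definition alpha_vec :: "('i \<Rightarrow> 'i \<Rightarrow> int) \<Rightarrow> 'i \<Rightarrow> 'i \<Rightarrow> real" where
  "alpha_vec A i = (\<lambda>j. real_of_int (A j i))"

definition s_refl :: "('i \<Rightarrow> 'i \<Rightarrow> int) \<Rightarrow> 'i \<Rightarrow> ('i \<Rightarrow> real) \<Rightarrow> ('i \<Rightarrow> real)" where
  "s_refl A i v = (\<lambda>j. v j - v i * alpha_vec A i j)"

definition hmin :: "'i lpath \<Rightarrow> 'i \<Rightarrow> real" where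
  "hmin \<pi> i = Inf ((\<lambda>t. \<pi> t i) ` {0..1})"

definition f_op :: "('i \<Rightarrow> 'i \<Rightarrow> int) \<Rightarrow> 'i \<Rightarrow> 'i lpath \<Rightarrow> 'i lpath option" where
  "f_op A i \<pi> =
     (let m = hmin \<pi> i; p = Sup {t \<in> {0..1}. \<pi> t i = m} in
      if \<pi> 1 i - m < 1 then None
      else let x = Inf {t \<in> {p..1}. \<pi> t i = m + 1} in
        Some (\<lambda>t. if t \<le> p then \<pi> t
                  else if t \<le> x then (\<lambda>j. \<pi> p j + s_refl A i (\<lambda>k. \<pi> t k - \<pi> p k) j)
                  else (\<lambda>j. \<pi> t j - alpha_vec A i j)))"

definition e_op :: "('i \<Rightarrow> 'i \<Rightarrow> int) \<Rightarrow> 'i \<Rightarrow> 'i lpath \<Rightarrow> 'i lpath option" where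
  "e_op A i \<pi> =
     (let m = hmin \<pi> i in
      if m > -1 then None
      else let q = Inf {t \<in> {0..1}. \<pi> t i = m};
               y = Sup {t \<in> {0..q}. \<pi> t i = m + 1} in
        Some (\<lambda>t. if t \<le> y then \<pi> t
                  else if t \<le> q then (\<lambda>j. \<pi> y j + s_refl A i (\<lambda>k. \<pi> t k - \<pi> y k) j)
                  else (\<lambda>j. \<pi> t j + alpha_vec A i j)))"

definition straight :: "('i \<Rightarrow> int) \<Rightarrow> 'i lpath" where
  "straight w = (\<lambda>t j. t * real_of_int (w j))"

text \<open>fword A [j1,...,jt] pi = f_{j1} ... f_{jt} pi (rightmost applied first); None = 0.\<close>
definition fword :: "('i \<Rightarrow> 'i \<Rightarrow> int) \<Rightarrow> 'i list \<Rightarrow> 'i lpath \<Rightarrow> 'i lpath option" where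
  "fword A js \<pi> = foldr (\<lambda>j acc. Option.bind acc (f_op A j)) js (Some \<pi>)"

definition e_pow :: "('i \<Rightarrow> 'i \<Rightarrow> int) \<Rightarrow> 'i \<Rightarrow> nat \<Rightarrow> 'i lpath \<Rightarrow> 'i lpath option" where
  "e_pow A i k \<pi> = ((\<lambda>acc. Option.bind acc (e_op A i)) ^^ k) (Some \<pi>)"

definition mu_dominant :: "('i \<Rightarrow> 'i \<Rightarrow> int) \<Rightarrow> ('i \<Rightarrow> int) \<Rightarrow> 'i lpath \<Rightarrow> bool" where
  "mu_dominant A \<mu> \<pi> \<longleftrightarrow> (\<forall>i. e_pow A i (nat (\<mu> i + 1)) \<pi> = None)"

end

theory Submission
  imports Defs "HOL-Analysis.Analysis"
begin
definition clamp01 :: "real \<Rightarrow> real" where "clamp01 x = max 0 (min 1 x)"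

lemma hmin_mono0:
  assumes "mono (\<lambda>t. \<pi> t i)" "\<pi> 0 i = 0"
  shows "hmin \<pi> i = 0"
proof -
  have "Inf ((\<lambda>t. \<pi> t i) ` {0..1}) = 0"
  proof (rule cInf_eq_minimum)
    show "0 \<in> (\<lambda>t. \<pi> t i) ` {0..1}" using assms(2) by force
  next
    fix y assume "y \<in> (\<lambda>t. \<pi> t i) ` {0..1}"
    then obtain t where t: "t \<in> {0..1}" "y = \<pi> t i" by auto
    have "\<pi> 0 i \<le> \<pi> t i" using assms(1) t(1) by (auto dest: monoD)
    then show "0 \<le> y" using t assms(2) by simp
  qed
  then show ?thesis by (simp add: hmin_def)
qed

lemma f_op_None:
  assumes "mono (\<lambda>t. \<pi> t i)" "\<pi> 0 i = 0" "\<pi> 1 i < 1"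
  shows "f_op A i \<pi> = None"
  using assms hmin_mono0[of \<pi> i, OF assms(1,2)] by (simp add: f_op_def Let_def)

lemma f_op_Some:
  assumes mo: "mono (\<lambda>t. \<pi> t i)" and z: "\<pi> 0 i = 0" and one: "\<pi> 1 i \<ge> 1"
    and co: "continuous_on {0..1} (\<lambda>t. \<pi> t i)"
  shows "f_op A i \<pi> = Some (\<lambda>t j. \<pi> t j - clamp01 (\<pi> t i) * alpha_vec A i j)"
proof -
  let ?h = "\<lambda>t. \<pi> t i"
  have m: "hmin \<pi> i = 0" by (rule hmin_mono0[of \<pi> i, OF mo z])
  define P where "P = {t \<in> {0..1::real}. ?h t = 0}"
  define p where "p = Sup P"
  have Pcl: "closed P" unfolding P_def by (rule continuous_closed_preimage_constant[OF co]) simp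
  have "0 \<in> P" using z by (simp add: P_def)
  moreover have "bdd_above P" unfolding P_def by (rule bdd_aboveI[of _ 1]) auto
  ultimately have "p \<in> P" unfolding p_def using closed_contains_Sup Pcl by blast
  then have p01: "0 \<le> p" "p \<le> 1" and hp: "?h p = 0" by (auto simp: P_def)
  define X where "X = {t \<in> {p..1::real}. ?h t = 1}"
  define x where "x = Inf X"
  have cop: "continuous_on {p..1} ?h" by (rule continuous_on_subset[OF co]) (use p01 in auto)
  have Xcl: "closed X" unfolding X_def by (rule continuous_closed_preimage_constant[OF cop]) simp
  obtain x0 where "p \<le> x0" "x0 \<le> 1" "?h x0 = 1"
    using IVT'[of ?h p 1 1, OF _ one p01(2) cop] hp by auto
  then have "X \<noteq> {}" by (auto simp: X_def)
  moreover have "bdd_below X" unfolding X_def by (rule bdd_belowI[of _ p]) auto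
  ultimately have "x \<in> X" unfolding x_def using closed_contains_Inf Xcl by blast
  then have px: "p \<le> x" "x \<le> 1" and hx: "?h x = 1" by (auto simp: X_def)
  have "f_op A i \<pi> = Some (\<lambda>t. if t \<le> p then \<pi> t
                  else if t \<le> x then (\<lambda>j. \<pi> p j + s_refl A i (\<lambda>k. \<pi> t k - \<pi> p k) j)
                  else (\<lambda>j. \<pi> t j - alpha_vec A i j))"
  proof -
    have ne: "\<not> (\<pi> 1 i - 0 < 1)" using one by simp
    show ?thesis
  apply (unfold f_op_def Let_def m)
  apply (subst if_not_P[OF ne])
  apply (unfold add_0_left P_def[symmetric] p_def[symmetric])
  apply (unfold X_def[symmetric] x_def[symmetric])
  apply (rule refl)
  done
  qed
  also have "\<dots> = Some (\<lambda>t j. \<pi> t j - clamp01 (\<pi> t i) * alpha_vec A i j)"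
  proof (rule arg_cong[where f=Some], rule ext, rule ext)
    fix t j
    consider "t \<le> p" | "p < t" "t \<le> x" | "x < t" by linarith
    then show "(if t \<le> p then \<pi> t
                  else if t \<le> x then (\<lambda>j. \<pi> p j + s_refl A i (\<lambda>k. \<pi> t k - \<pi> p k) j)
                  else (\<lambda>j. \<pi> t j - alpha_vec A i j)) j = \<pi> t j - clamp01 (\<pi> t i) * alpha_vec A i j"
    proof cases
      case 1
      have "?h t \<le> ?h p" using monoD[OF mo 1] by simp
      then have "clamp01 (?h t) = 0" using hp by (simp add: clamp01_def)
      then show ?thesis using 1 by (simp only: if_P[OF 1]) simp
    next
      case 2
      have "?h p \<le> ?h t" "?h t \<le> ?h x" using monoD[OF mo, of p t] monoD[OF mo, of t x] 2 by simp_all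
      then have "clamp01 (?h t) = ?h t" using hp hx by (simp add: clamp01_def)
      moreover have "\<not> t \<le> p" using 2 by simp
      ultimately show ?thesis using 2 hp by (simp only: if_not_P if_P) (simp add: s_refl_def algebra_simps)
    next
      case 3
      have "?h x \<le> ?h t" using monoD[OF mo, of x t] 3 by simp
      then have "clamp01 (?h t) = 1" using hx by (simp add: clamp01_def)
      moreover have "\<not> t \<le> p" "\<not> t \<le> x" using 3 px by simp_all
      ultimately show ?thesis by (simp only: if_not_P) simp
    qed
  qed
  finally show ?thesis .
qed

lemma hmin_ge:
  assumes "\<And>t. t \<in> {0..1} \<Longrightarrow> \<pi> t i \<ge> c"
  shows "hmin \<pi> i \<ge> c"
  unfolding hmin_def by (rule cInf_greatest) (use assms in auto)

lemma e_op_None_if: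
  assumes "\<And>t. t \<in> {0..1} \<Longrightarrow> \<pi> t i \<ge> c" "c > -1"
  shows "e_op A i \<pi> = None"
proof -
  have "hmin \<pi> i > -1" using hmin_ge[where \<pi>=\<pi> and i=i and c=c, OF assms(1)] assms(2) by linarith
  then show ?thesis by (simp add: e_op_def Let_def)
qed

lemma e_op_not_None:
  assumes "t0 \<in> {0..1}" "\<pi> t0 i \<le> -1" "\<And>t. t \<in> {0..1} \<Longrightarrow> \<pi> t i \<ge> c"
  shows "e_op A i \<pi> \<noteq> None"
proof -
  have "hmin \<pi> i \<le> \<pi> t0 i" unfolding hmin_def
    by (rule cInf_lower) (use assms in \<open>auto intro!: bdd_belowI[of _ c]\<close>)
  then have "\<not> hmin \<pi> i > -1" using assms(2) by linarith
  then show ?thesis by (simp add: e_op_def Let_def)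
qed

lemma e_op_twice:
  assumes co: "continuous_on {0..1} (\<lambda>t. \<pi> t i)" and z: "\<pi> 0 i = 0"
    and ge: "\<And>t. t \<in> {0..1} \<Longrightarrow> \<pi> t i \<ge> -1" and Aii: "A i i = 2"
    and e: "e_op A i \<pi> = Some \<pi>'"
  shows "e_op A i \<pi>' = None"
proof -
  let ?h = "\<lambda>t. \<pi> t i"
  define m where "m = hmin \<pi> i"
  have mge: "m \<ge> -1" unfolding m_def by (rule hmin_ge) (use ge in auto)
  have "\<not> m > -1"
  proof
    assume "m > -1"
    then have "e_op A i \<pi> = None" unfolding e_op_def Let_def m_def[symmetric] by (rule if_P)
    then show False using e by simp
  qed
  then have m1: "m = -1" using mge by linarith
  define Q where "Q = {t \<in> {0..1::real}. ?h t = m}"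
  define q where "q = Inf Q"
  define Y where "Y = {t \<in> {0..q}. ?h t = m + 1}"
  define y where "y = Sup Y"
  have pi': "\<pi>' = (\<lambda>t. if t \<le> y then \<pi> t
                  else if t \<le> q then (\<lambda>j. \<pi> y j + s_refl A i (\<lambda>k. \<pi> t k - \<pi> y k) j)
                  else (\<lambda>j. \<pi> t j + alpha_vec A i j))"
  proof -
    have nm: "\<not> m > -1" using m1 by simp
    have "e_op A i \<pi> = Some (\<lambda>t. if t \<le> y then \<pi> t
                  else if t \<le> q then (\<lambda>j. \<pi> y j + s_refl A i (\<lambda>k. \<pi> t k - \<pi> y k) j)
                  else (\<lambda>j. \<pi> t j + alpha_vec A i j))"
      apply (unfold e_op_def Let_def m_def[symmetric])
      apply (subst if_not_P[OF nm])
      apply (unfold Q_def[symmetric] q_def[symmetric] Y_def[symmetric] y_def[symmetric])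
      apply (rule refl)
      done
    then show ?thesis using e by simp
  qed
  obtain t1 where t1: "t1 \<in> {0..1}" "\<forall>s\<in>{0..1}. ?h t1 \<le> ?h s"
    using continuous_attains_inf[of "{0..1::real}" ?h] co by auto
  have "m = ?h t1" unfolding m_def hmin_def
    by (rule cInf_eq_minimum) (use t1 in auto)
  then have "t1 \<in> Q" using t1 by (simp add: Q_def)
  moreover have "closed Q" unfolding Q_def by (rule continuous_closed_preimage_constant[OF co]) simp
  moreover have "bdd_below Q" unfolding Q_def by (rule bdd_belowI[of _ 0]) auto
  ultimately have "q \<in> Q" unfolding q_def using closed_contains_Inf by blast
  then have q01: "0 \<le> q" "q \<le> 1" and hq: "?h q = -1" using m1 by (auto simp: Q_def)
  have qle: "q \<le> t" if "t \<in> {0..1}" "?h t = -1" for t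
    unfolding q_def by (rule cInf_lower) (use that m1 in \<open>auto simp: Q_def intro!: bdd_belowI[of _ 0]\<close>)
  have coq: "continuous_on {0..q} ?h" by (rule continuous_on_subset[OF co]) (use q01 in auto)
  have "0 \<in> Y" using z q01 m1 by (simp add: Y_def)
  moreover have "closed Y" unfolding Y_def by (rule continuous_closed_preimage_constant[OF coq]) simp
  moreover have "bdd_above Y" unfolding Y_def by (rule bdd_aboveI[of _ q]) auto
  ultimately have "y \<in> Y" unfolding y_def using closed_contains_Sup by blast
  then have y0q: "0 \<le> y" "y \<le> q" and hy: "?h y = 0" using m1 by (auto simp: Y_def)
  have yge: "s \<le> y" if "s \<in> Y" for s
    unfolding y_def by (rule cSup_upper) (use that in \<open>auto simp: Y_def intro!: bdd_aboveI[of _ q]\<close>)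
  have coy: "continuous_on {0..y} ?h" by (rule continuous_on_subset[OF co]) (use y0q q01 in auto)
  obtain t2 where t2: "t2 \<in> {0..y}" "\<forall>s\<in>{0..y}. ?h t2 \<le> ?h s"
    using continuous_attains_inf[of "{0..y::real}" ?h] coy y0q by auto
  have "?h t2 \<noteq> -1"
  proof
    assume "?h t2 = -1"
    then have "q \<le> t2" using qle t2(1) y0q q01 by auto
    then have "t2 = y" using t2(1) y0q by auto
    then show False using hy \<open>?h t2 = -1\<close> by simp
  qed
  moreover have "?h t2 \<ge> -1" using ge t2(1) y0q q01 by auto
  ultimately have c0: "?h t2 > -1" by linarith
  define c where "c = min (?h t2) 0"
  have cgt: "c > -1" using c0 by (simp add: c_def)
  have cle: "\<pi>' t i \<ge> c" if t: "t \<in> {0..1}" for t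
  proof -
    consider "t \<le> y" | "y < t" "t \<le> q" | "q < t" by linarith
    then show ?thesis
    proof cases
      case 1
      then have "?h t2 \<le> ?h t" using t2(2) t by auto
      then show ?thesis using 1 by (simp add: pi' c_def)
    next
      case 2
      have "?h t \<le> 0"
      proof (rule ccontr)
        assume "\<not> ?h t \<le> 0"
        then have "?h q \<le> 0" "0 \<le> ?h t" using hq by auto
        moreover have "continuous_on {t..q} ?h" by (rule continuous_on_subset[OF co]) (use 2 q01 y0q in auto)
        ultimately obtain s where s: "t \<le> s" "s \<le> q" "?h s = 0"
          using IVT2'[of ?h q 0 t] 2 by auto
        then have "s \<in> Y" using 2 y0q m1 by (auto simp: Y_def)
        then have "s \<le> y" by (rule yge)
        then show False using s 2 by auto
      qed
      moreover have "\<not> t \<le> y" using 2 by simp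
      ultimately show ?thesis using 2 hy Aii
        by (simp only: pi' if_not_P if_P) (simp add: s_refl_def alpha_vec_def c_def)
    next
      case 3
      moreover have "\<not> t \<le> y" "\<not> t \<le> q" using 3 y0q by auto
      ultimately show ?thesis using ge[OF t] Aii
        by (simp only: pi' if_not_P) (simp add: alpha_vec_def c_def)
    qed
  qed
  show ?thesis by (rule e_op_None_if[where c=c and \<pi>=\<pi>' and i=i, OF cle cgt])
qed

definition PG :: "('i::finite \<Rightarrow> 'i \<Rightarrow> int) \<Rightarrow> ('i \<Rightarrow> int) \<Rightarrow> ('i \<Rightarrow> real \<Rightarrow> real) \<Rightarrow> 'i lpath" where
  "PG A l G = (\<lambda>t j. t * real_of_int (l j) - (\<Sum>m\<in>UNIV. G m t * real_of_int (A j m)))"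

fun Gf :: "('i::finite \<Rightarrow> 'i \<Rightarrow> int) \<Rightarrow> ('i \<Rightarrow> int) \<Rightarrow> 'i list \<Rightarrow> 'i \<Rightarrow> real \<Rightarrow> real" where
  "Gf A l [] = (\<lambda>m t. 0)"
| "Gf A l (k # ks) = (Gf A l ks)(k := (\<lambda>t. clamp01 (PG A l (Gf A l ks) t k)))"

fun okF :: "('i::finite \<Rightarrow> 'i \<Rightarrow> int) \<Rightarrow> ('i \<Rightarrow> int) \<Rightarrow> 'i list \<Rightarrow> bool" where
  "okF A l [] = True"
| "okF A l (k # ks) = (okF A l ks \<and> (l k \<ge> 1 \<or> (\<exists>m\<in>set ks. dyn_adj A m k)))"

lemma SL_diag: "simply_laced_GCM A \<Longrightarrow> A i i = 2"
  by (simp add: simply_laced_GCM_def)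
lemma SL_off: "simply_laced_GCM A \<Longrightarrow> i \<noteq> j \<Longrightarrow> A i j = 0 \<or> A i j = -1"
  by (auto simp add: simply_laced_GCM_def)
lemma SL_sym: "simply_laced_GCM A \<Longrightarrow> A i j = A j i"
  by (simp add: simply_laced_GCM_def)
lemma SL_adj: "simply_laced_GCM A \<Longrightarrow> dyn_adj A i j \<longleftrightarrow> i \<noteq> j \<and> A i j = -1"
  using SL_off[of A i j] by (auto simp add: dyn_adj_def)
lemma SL_nadj: "simply_laced_GCM A \<Longrightarrow> i \<noteq> j \<Longrightarrow> \<not> dyn_adj A i j \<Longrightarrow> A i j = 0"
  using SL_off[of A i j] by (auto simp add: dyn_adj_def)
lemma adj_sym: "simply_laced_GCM A \<Longrightarrow> dyn_adj A i j \<longleftrightarrow> dyn_adj A j i"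
  using SL_sym[of A i j] by (auto simp add: dyn_adj_def)

lemma Gf_notin: "m \<notin> set ks \<Longrightarrow> Gf A l ks m = (\<lambda>t. 0)"
  by (induction ks) auto

lemma PG_upd: "PG A l (G(k := f)) t j = PG A l G t j - (f t - G k t) * real_of_int (A j k)"
proof -
  have "(\<Sum>m\<in>UNIV. (G(k := f)) m t * real_of_int (A j m))
      = (\<Sum>m\<in>UNIV. G m t * real_of_int (A j m) + (if m = k then (f t - G k t) * real_of_int (A j k) else 0))"
    by (rule sum.cong) (auto simp: algebra_simps)
  also have "\<dots> = (\<Sum>m\<in>UNIV. G m t * real_of_int (A j m)) + (f t - G k t) * real_of_int (A j k)"
    by (simp add: sum.distrib)
  finally show ?thesis by (simp add: PG_def)
qed

lemma PG_alt: "PG A l G t j = t * real_of_int (l j) + (\<Sum>m\<in>UNIV. G m t * real_of_int (- A j m))"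
  by (simp add: PG_def sum_negf)

definition Inv :: "('i::finite \<Rightarrow> 'i \<Rightarrow> int) \<Rightarrow> ('i \<Rightarrow> int) \<Rightarrow> 'i list \<Rightarrow> bool" where
  "Inv A l ks \<longleftrightarrow> (\<forall>m. continuous_on UNIV (Gf A l ks m) \<and> mono (Gf A l ks m) \<and>
      (\<forall>t\<le>0. Gf A l ks m t = 0) \<and> (\<forall>t. 0 \<le> Gf A l ks m t \<and> Gf A l ks m t \<le> 1) \<and>
      (m \<in> set ks \<longrightarrow> (\<forall>t\<ge>1. Gf A l ks m t = 1)))"

lemma clamp01_mono: "x \<le> y \<Longrightarrow> clamp01 x \<le> clamp01 y"
  by (simp add: clamp01_def)
lemma clamp01_cont: "continuous_on UNIV clamp01"
  unfolding clamp01_def by (intro continuous_intros)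
lemma clamp01_id: "0 \<le> x \<Longrightarrow> x \<le> 1 \<Longrightarrow> clamp01 x = x"
  by (simp add: clamp01_def)

context
  fixes A :: "'i::finite \<Rightarrow> 'i \<Rightarrow> int" and l :: "'i \<Rightarrow> int" and ks :: "'i list" and k :: 'i
  assumes SL: "simply_laced_GCM A" and lpos: "\<forall>i. l i \<ge> 0" and inv: "Inv A l ks"
    and kn: "k \<notin> set ks"
begin

lemma H_cont: "continuous_on UNIV (\<lambda>t. PG A l (Gf A l ks) t k)"
proof -
  have "\<And>m. continuous_on UNIV (Gf A l ks m)" using inv by (simp add: Inv_def)
  then show ?thesis unfolding PG_def by (intro continuous_intros) auto
qed

lemma H_nonneg_terms: "0 \<le> Gf A l ks m t * real_of_int (- A k m)"
proof (cases "m = k")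
  case True then show ?thesis using Gf_notin[OF kn] by simp
next
  case False
  then have "- A k m \<ge> 0" using SL_off[OF SL False[symmetric]] by auto
  moreover have "Gf A l ks m t \<ge> 0" using inv by (simp add: Inv_def)
  ultimately show ?thesis using mult_nonneg_nonpos[of "Gf A l ks m t" "real_of_int (A k m)"] by simp
qed

lemma H_mono: "mono (\<lambda>t. PG A l (Gf A l ks) t k)"
proof (rule monoI)
  fix t t' :: real assume tt: "t \<le> t'"
  have "t * real_of_int (l k) \<le> t' * real_of_int (l k)"
    using lpos tt by (simp add: mult_right_mono)
  moreover have "(\<Sum>m\<in>UNIV. Gf A l ks m t * real_of_int (- A k m)) \<le> (\<Sum>m\<in>UNIV. Gf A l ks m t' * real_of_int (- A k m))"
  proof (rule sum_mono)
    fix m :: 'i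
    show "Gf A l ks m t * real_of_int (- A k m) \<le> Gf A l ks m t' * real_of_int (- A k m)"
    proof (cases "m = k")
      case True then show ?thesis using Gf_notin[OF kn] by simp
    next
      case False
      then have "- A k m \<ge> 0" using SL_off[OF SL False[symmetric]] by auto
      moreover have "mono (Gf A l ks m)" using inv by (simp add: Inv_def)
      then have "Gf A l ks m t \<le> Gf A l ks m t'" using tt by (rule monoD)
      ultimately show ?thesis by (simp add: mult_right_mono_neg)
    qed
  qed
  ultimately show "PG A l (Gf A l ks) t k \<le> PG A l (Gf A l ks) t' k"
    unfolding PG_alt by linarith
qed

lemma H_zero: "t \<le> 0 \<Longrightarrow> PG A l (Gf A l ks) t k \<le> 0"
proof -
  assume t: "t \<le> 0"
  have "Gf A l ks m t = 0" for m using inv t by (simp add: Inv_def)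
  moreover have "real_of_int (l k) \<ge> 0" using lpos by simp
  ultimately show ?thesis using t by (simp add: PG_def mult_nonpos_nonneg)
qed

lemma H_0: "PG A l (Gf A l ks) 0 k = 0"
proof -
  have "Gf A l ks m 0 = 0" for m using inv by (simp add: Inv_def)
  then show ?thesis by (simp add: PG_def)
qed

lemma H_nonneg: "t \<ge> 0 \<Longrightarrow> PG A l (Gf A l ks) t k \<ge> 0"
  using H_0 monoD[OF H_mono, of 0 t] by simp

lemma H_one: "PG A l (Gf A l ks) 1 k \<ge> 1 \<longleftrightarrow> (l k \<ge> 1 \<or> (\<exists>m\<in>set ks. dyn_adj A m k))"
proof -
  have G1: "Gf A l ks m 1 = (if m \<in> set ks then 1 else 0)" for m
    using inv Gf_notin[of m ks A l] by (auto simp: Inv_def)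
  have S: "(\<Sum>m\<in>UNIV. Gf A l ks m 1 * real_of_int (- A k m)) = (\<Sum>m\<in>set ks. real_of_int (- A k m))"
  proof -
    have "(\<Sum>m\<in>UNIV. Gf A l ks m 1 * real_of_int (- A k m)) = (\<Sum>m\<in>UNIV. if m \<in> set ks then real_of_int (- A k m) else 0)"
      by (rule sum.cong) (auto simp: G1)
    also have "\<dots> = (\<Sum>m\<in>{m\<in>UNIV. m \<in> set ks}. real_of_int (- A k m))"
      by (rule sum.inter_filter[symmetric]) simp
    finally show ?thesis by simp
  qed
  have terms: "\<And>m. m \<in> set ks \<Longrightarrow> 0 \<le> real_of_int (- A k m) \<and> (real_of_int (- A k m) \<noteq> 0 \<longleftrightarrow> dyn_adj A m k)"
  proof -
    fix m assume m: "m \<in> set ks"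
    then have "m \<noteq> k" using kn by auto
    then show "0 \<le> real_of_int (- A k m) \<and> (real_of_int (- A k m) \<noteq> 0 \<longleftrightarrow> dyn_adj A m k)"
      using SL_off[OF SL, of k m] adj_sym[OF SL, of m k] SL_adj[OF SL, of k m] by auto
  qed
  have sum_ge: "(\<Sum>m\<in>set ks. real_of_int (- A k m)) \<ge> 1 \<longleftrightarrow> (\<exists>m\<in>set ks. dyn_adj A m k)"
  proof
    assume "1 \<le> (\<Sum>m\<in>set ks. real_of_int (- A k m))"
    then have "(\<Sum>m\<in>set ks. real_of_int (- A k m)) \<noteq> 0" by linarith
    then obtain m where "m \<in> set ks" "real_of_int (- A k m) \<noteq> 0" by (meson sum.neutral)
    then show "\<exists>m\<in>set ks. dyn_adj A m k" using terms by blast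
  next
    assume "\<exists>m\<in>set ks. dyn_adj A m k"
    then obtain m where m: "m \<in> set ks" "dyn_adj A m k" by blast
    then have "A k m = -1" using SL_adj[OF SL, of k m] adj_sym[OF SL, of m k] by auto
    then have "real_of_int (- A k m) = 1" by simp
    moreover have "real_of_int (- A k m) \<le> (\<Sum>m\<in>set ks. real_of_int (- A k m))"
      by (rule member_le_sum) (use m terms in auto)
    ultimately show "1 \<le> (\<Sum>m\<in>set ks. real_of_int (- A k m))" by simp
  qed
  have "0 \<le> (\<Sum>m\<in>set ks. real_of_int (- A k m))" by (rule sum_nonneg) (use terms in auto)
  moreover have "l k \<ge> 1 \<or> l k = 0" using lpos[rule_format, of k] by linarith
  ultimately show ?thesis using sum_ge unfolding PG_alt S by auto
qed

end

lemma Inv_Nil: "Inv A l []"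
  by (simp add: Inv_def mono_def)

lemma Inv_Cons:
  assumes SL: "simply_laced_GCM A" and lpos: "\<forall>i. l i \<ge> 0" and inv: "Inv A l ks"
    and kn: "k \<notin> set ks" and one: "PG A l (Gf A l ks) 1 k \<ge> 1"
  shows "Inv A l (k # ks)"
proof -
  let ?H = "\<lambda>t. PG A l (Gf A l ks) t k"
  let ?g = "\<lambda>t. clamp01 (?H t)"
  have c: "continuous_on UNIV ?g"
    using continuous_on_compose2[OF clamp01_cont H_cont[OF SL lpos inv kn]] by simp
  have mo: "mono ?g"
  proof (rule monoI)
    fix x y :: real assume "x \<le> y"
    then have "?H x \<le> ?H y" using monoD[OF H_mono[OF SL lpos inv kn]] by simp
    then show "?g x \<le> ?g y" by (rule clamp01_mono)
  qed
  have z: "\<forall>t\<le>0. ?g t = 0"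
  proof (intro allI impI)
    fix t :: real assume "t \<le> 0"
    then have "?H t \<le> 0" by (rule H_zero[OF SL lpos inv kn])
    then show "?g t = 0" by (simp add: clamp01_def)
  qed
  have b: "\<forall>t. 0 \<le> ?g t \<and> ?g t \<le> 1" by (auto simp: clamp01_def)
  have o: "\<forall>t\<ge>1. ?g t = 1"
  proof (intro allI impI)
    fix t :: real assume "t \<ge> 1"
    then have "?H 1 \<le> ?H t" using monoD[OF H_mono[OF SL lpos inv kn]] by simp
    then show "?g t = 1" using one by (simp add: clamp01_def)
  qed
  show ?thesis using inv c mo z b o unfolding Inv_def by auto
qed

lemma straight_PG: "straight l = PG A l (\<lambda>m t. 0)"
  by (simp add: straight_def PG_def)

lemma fword_Cons: "fword A (k # ks) \<pi> = Option.bind (fword A ks \<pi>) (f_op A k)"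
  by (simp add: fword_def)

lemma fword_PG:
  assumes SL: "simply_laced_GCM A" and lpos: "\<forall>i. l i \<ge> 0" and d: "distinct ks"
  shows "fword A ks (straight l) = (if okF A l ks then Some (PG A l (Gf A l ks)) else None)
    \<and> (okF A l ks \<longrightarrow> Inv A l ks)"
  using d
proof (induction ks)
  case Nil
  then show ?case by (simp add: fword_def straight_PG Inv_Nil)
next
  case (Cons k ks)
  then have kn: "k \<notin> set ks" and dk: "distinct ks" by auto
  note IH = Cons.IH[OF dk]
  show ?case
  proof (cases "okF A l ks")
    case False
    then show ?thesis using IH by (simp add: fword_Cons)
  next
    case True
    then have inv: "Inv A l ks" and fw: "fword A ks (straight l) = Some (PG A l (Gf A l ks))" using IH by auto
    let ?\<pi> = "PG A l (Gf A l ks)"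
    have mo: "mono (\<lambda>t. ?\<pi> t k)" by (rule H_mono[OF SL lpos inv kn])
    have z: "?\<pi> 0 k = 0" by (rule H_0[OF SL lpos inv kn])
    have co: "continuous_on {0..1} (\<lambda>t. ?\<pi> t k)"
      by (rule continuous_on_subset[OF H_cont[OF SL lpos inv kn]]) simp
    show ?thesis
    proof (cases "?\<pi> 1 k \<ge> 1")
      case one: True
      have ok: "okF A l (k # ks)" using True one H_one[OF SL lpos inv kn] by simp
      have "f_op A k ?\<pi> = Some (\<lambda>t j. ?\<pi> t j - clamp01 (?\<pi> t k) * alpha_vec A k j)"
        by (rule f_op_Some[where \<pi>="?\<pi>" and i=k, OF mo z one co])
      also have "(\<lambda>t j. ?\<pi> t j - clamp01 (?\<pi> t k) * alpha_vec A k j) = PG A l (Gf A l (k # ks))"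
        by (intro ext) (simp add: PG_upd Gf_notin[OF kn] alpha_vec_def)
      finally show ?thesis using fw ok Inv_Cons[OF SL lpos inv kn one] by (simp add: fword_Cons)
    next
      case False
      then have nok: "\<not> okF A l (k # ks)" using H_one[OF SL lpos inv kn] by simp
      have "f_op A k ?\<pi> = None" by (rule f_op_None[where \<pi>="?\<pi>" and i=k, OF mo z]) (use False in simp)
      then show ?thesis using fw nok by (simp add: fword_Cons del: okF.simps)
    qed
  qed
qed

lemma Gf_append: "m \<notin> set xs \<Longrightarrow> Gf A l (xs @ ys) m = Gf A l ys m"
  by (induction xs) auto

lemma okF_append: "okF A l (xs @ ys) \<Longrightarrow> okF A l ys"
  by (induction xs) auto

lemma PG_cont: "Inv A l ks \<Longrightarrow> continuous_on UNIV (\<lambda>t. PG A l (Gf A l ks) t i)"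
proof -
  assume inv: "Inv A l ks"
  have "\<And>m. continuous_on UNIV (Gf A l ks m)" using inv by (simp add: Inv_def)
  then show ?thesis unfolding PG_def by (intro continuous_intros) auto
qed

lemma PG_0: "Inv A l ks \<Longrightarrow> PG A l (Gf A l ks) 0 i = 0"
proof -
  assume inv: "Inv A l ks"
  have "Gf A l ks m 0 = 0" for m using inv by (simp add: Inv_def)
  then show ?thesis by (simp add: PG_def)
qed

lemma e_pow_Suc: "e_pow A i (Suc k) \<pi> = Option.bind (e_pow A i k \<pi>) (e_op A i)"
  by (simp add: e_pow_def)

lemma e_pow_1: "e_pow A i 1 \<pi> = e_op A i \<pi>"
  by (simp add: e_pow_def)

lemma e_pow_None_mono: "e_pow A i k \<pi> = None \<Longrightarrow> k \<le> k' \<Longrightarrow> e_pow A i k' \<pi> = None"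
proof (induction k')
  case 0 then show ?case by simp
next
  case (Suc k')
  show ?case
  proof (cases "k = Suc k'")
    case True then show ?thesis using Suc by simp
  next
    case False
    then have "e_pow A i k' \<pi> = None" using Suc by simp
    then show ?thesis by (simp add: e_pow_Suc)
  qed
qed

context
  fixes A :: "'i::finite \<Rightarrow> 'i \<Rightarrow> int" and l :: "'i \<Rightarrow> int" and ks :: "'i list"
  assumes SL: "simply_laced_GCM A" and lpos: "\<forall>i. l i \<ge> 0" and dks: "distinct ks"
    and ok: "okF A l ks"
begin

lemma inv_suffix: "okF A l ys \<Longrightarrow> distinct ys \<Longrightarrow> Inv A l ys"
  using fword_PG[OF SL lpos] by blast

lemma inv_ks: "Inv A l ks" using inv_suffix[OF ok dks] .

lemma split_at:
  assumes s: "s < length ks"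
  shows "ks = take s ks @ ks ! s # drop (Suc s) ks"
    and "ks ! s \<notin> set (take s ks)" "ks ! s \<notin> set (drop (Suc s) ks)"
    and "set (take s ks) \<inter> set (drop (Suc s) ks) = {}"
proof -
  show e: "ks = take s ks @ ks ! s # drop (Suc s) ks" using s by (simp add: id_take_nth_drop)
  have "distinct (take s ks @ ks ! s # drop (Suc s) ks)" using dks e by simp
  then show "ks ! s \<notin> set (take s ks)" "ks ! s \<notin> set (drop (Suc s) ks)"
    and "set (take s ks) \<inter> set (drop (Suc s) ks) = {}" by auto
qed

lemma G_at:
  assumes s: "s < length ks"
  shows "Gf A l ks (ks ! s) = (\<lambda>t. clamp01 (PG A l (Gf A l (drop (Suc s) ks)) t (ks ! s)))"
proof -
  have "Gf A l ks (ks ! s) = Gf A l (ks ! s # drop (Suc s) ks) (ks ! s)"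
    using Gf_append[OF split_at(2)[OF s], of A l "ks ! s # drop (Suc s) ks"] split_at(1)[OF s] by simp
  then show ?thesis by simp
qed

lemma G_other:
  assumes s: "s < length ks" and m: "m \<notin> set (take s ks)" "m \<noteq> ks ! s"
  shows "Gf A l ks m = Gf A l (drop (Suc s) ks) m"
proof -
  have "Gf A l ks m = Gf A l (ks ! s # drop (Suc s) ks) m"
    using Gf_append[OF m(1), of A l "ks ! s # drop (Suc s) ks"] split_at(1)[OF s] by simp
  then show ?thesis using m(2) by simp
qed

lemma ok_drop: "okF A l (drop s ks)"
  using okF_append[of A l "take s ks" "drop s ks"] ok by simp

lemma suffix_facts:
  assumes s: "s < length ks"
  shows "Inv A l (drop (Suc s) ks)" "PG A l (Gf A l (drop (Suc s) ks)) 1 (ks ! s) \<ge> 1"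
proof -
  have dd: "distinct (drop (Suc s) ks)" using dks by simp
  show inv: "Inv A l (drop (Suc s) ks)" by (rule inv_suffix[OF ok_drop dd])
  have "drop s ks = ks ! s # drop (Suc s) ks" using s by (simp add: Cons_nth_drop_Suc)
  then have "okF A l (ks ! s # drop (Suc s) ks)" using ok_drop[of s] by simp
  then have "l (ks ! s) \<ge> 1 \<or> (\<exists>m\<in>set (drop (Suc s) ks). dyn_adj A m (ks ! s))" by simp
  then show "PG A l (Gf A l (drop (Suc s) ks)) 1 (ks ! s) \<ge> 1"
    using H_one[OF SL lpos inv split_at(3)[OF s]] by simp
qed

lemma coord:
  assumes s: "s < length ks"
  defines "H \<equiv> \<lambda>t. PG A l (Gf A l (drop (Suc s) ks)) t (ks ! s)"
  shows "PG A l (Gf A l ks) t (ks ! s) = H t - 2 * clamp01 (H t)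
           + (\<Sum>m\<in>set (take s ks). Gf A l ks m t * real_of_int (- A (ks ! s) m))"
proof -
  let ?i = "ks ! s" and ?D = "drop (Suc s) ks" and ?T = "set (take s ks)"
  let ?c = "\<lambda>m. real_of_int (- A ?i m)"
  have pt: "Gf A l ks m t * ?c m = Gf A l ?D m t * ?c m + (if m = ?i then clamp01 (H t) * ?c m else 0)
              + (if m \<in> ?T then Gf A l ks m t * ?c m else 0)" for m
  proof -
    consider "m \<in> ?T" | "m = ?i" | "m \<notin> ?T" "m \<noteq> ?i" by blast
    then show ?thesis
    proof cases
      case 1
      then have "m \<notin> set ?D" using split_at(4)[OF s] by auto
      moreover have "m \<noteq> ?i" using 1 split_at(2)[OF s] by auto
      ultimately show ?thesis using 1 Gf_notin[of m ?D A l] by simp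
    next
      case 2
      then show ?thesis using G_at[OF s] split_at(2,3)[OF s] Gf_notin[of ?i ?D A l] by (simp add: H_def)
    next
      case 3
      then show ?thesis using G_other[OF s 3] by simp
    qed
  qed
  have "(\<Sum>m\<in>UNIV. Gf A l ks m t * ?c m) = (\<Sum>m\<in>UNIV. Gf A l ?D m t * ?c m + (if m = ?i then clamp01 (H t) * ?c m else 0)
              + (if m \<in> ?T then Gf A l ks m t * ?c m else 0))"
    by (rule sum.cong[OF refl]) (rule pt)
  also have "\<dots> = (\<Sum>m\<in>UNIV. Gf A l ?D m t * ?c m)
      + (\<Sum>m\<in>UNIV. (if m = ?i then clamp01 (H t) * ?c m else 0))
      + (\<Sum>m\<in>UNIV. (if m \<in> ?T then Gf A l ks m t * ?c m else 0))"
    by (simp only: sum.distrib)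
  also have "(\<Sum>m\<in>UNIV. (if m = ?i then clamp01 (H t) * ?c m else 0)) = - 2 * clamp01 (H t)"
    using SL_diag[OF SL, of ?i] by simp
  also have "(\<Sum>m\<in>UNIV. (if m \<in> ?T then Gf A l ks m t * ?c m else 0)) = (\<Sum>m\<in>?T. Gf A l ks m t * ?c m)"
    using sum.inter_filter[of UNIV "\<lambda>m. Gf A l ks m t * ?c m" "\<lambda>m. m \<in> ?T"] by simp
  finally show ?thesis unfolding PG_alt H_def by simp
qed

lemma take_terms_nonneg:
  assumes s: "s < length ks" and m: "m \<in> set (take s ks)"
  shows "0 \<le> Gf A l ks m t * real_of_int (- A (ks ! s) m)"
proof -
  have "m \<noteq> ks ! s" using m split_at(2)[OF s] by auto
  then have "- A (ks ! s) m \<ge> 0" using SL_off[OF SL, of "ks ! s" m] by auto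
  moreover have "Gf A l ks m t \<ge> 0" using inv_ks by (simp add: Inv_def)
  ultimately show ?thesis using mult_nonneg_nonpos[of "Gf A l ks m t" "real_of_int (A (ks ! s) m)"] by simp
qed

lemma coord_ge_m1:
  assumes s: "s < length ks" and t: "t \<in> {0..1}"
  shows "PG A l (Gf A l ks) t (ks ! s) \<ge> -1"
proof -
  let ?H = "PG A l (Gf A l (drop (Suc s) ks)) t (ks ! s)"
  have "?H \<ge> 0" using H_nonneg[OF SL lpos suffix_facts(1)[OF s] split_at(3)[OF s]] t by simp
  then have a: "?H - 2 * clamp01 ?H \<ge> -1" by (simp add: clamp01_def)
  have "(\<Sum>m\<in>set (take s ks). Gf A l ks m t * real_of_int (- A (ks ! s) m)) \<ge> 0"
    by (rule sum_nonneg) (rule take_terms_nonneg[OF s])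
  then show ?thesis using a coord[OF s, of t] by simp
qed

lemma G_le_earlier:
  assumes r: "r < s" and s: "s < length ks" and adj: "dyn_adj A (ks ! r) (ks ! s)"
    and t: "0 \<le> t"
  shows "Gf A l ks (ks ! s) t \<le> Gf A l ks (ks ! r) t"
proof -
  have rl: "r < length ks" using r s by simp
  let ?m = "ks ! r" and ?i = "ks ! s" and ?D = "drop (Suc r) ks"
  have iD: "?i \<in> set ?D" using r s by (auto simp: in_set_conv_nth intro!: exI[of _ "s - Suc r"])
  have "?i \<notin> set (take (Suc r) ks)"
  proof
    assume "?i \<in> set (take (Suc r) ks)"
    moreover have "set (take (Suc r) ks) \<inter> set ?D = {}"
      using dks by (metis append_take_drop_id distinct_append)
    ultimately show False using iD by auto
  qed
  then have Gi: "Gf A l ks ?i = Gf A l ?D ?i"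
    using Gf_append[of ?i "take (Suc r) ks" A l ?D] by simp
  have invD: "Inv A l ?D" by (rule suffix_facts(1)[OF rl])
  have Ami: "A ?m ?i = -1" using adj SL_adj[OF SL] by auto
  have "Gf A l ?D ?i t * real_of_int (- A ?m ?i) \<le> (\<Sum>m\<in>UNIV. Gf A l ?D m t * real_of_int (- A ?m m))"
    by (rule member_le_sum) (use H_nonneg_terms[OF SL lpos invD split_at(3)[OF rl]] in auto)
  moreover have "t * real_of_int (l ?m) \<ge> 0" using t lpos by simp
  ultimately have "Gf A l ?D ?i t \<le> PG A l (Gf A l ?D) t ?m" unfolding PG_alt using Ami by simp
  then have "clamp01 (Gf A l ?D ?i t) \<le> Gf A l ks ?m t"
    using G_at[OF rl] clamp01_mono by simp
  moreover have "clamp01 (Gf A l ?D ?i t) = Gf A l ?D ?i t"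
    using invD by (simp add: Inv_def clamp01_id)
  ultimately show ?thesis using Gi by simp
qed

lemma coord_ge_0:
  assumes s: "s < length ks" and t: "t \<in> {0..1}" and ex: "\<exists>r<s. dyn_adj A (ks ! r) (ks ! s)"
  shows "PG A l (Gf A l ks) t (ks ! s) \<ge> 0"
proof -
  obtain r where r: "r < s" "dyn_adj A (ks ! r) (ks ! s)" using ex by blast
  let ?H = "PG A l (Gf A l (drop (Suc s) ks)) t (ks ! s)"
  let ?m = "ks ! r"
  have mT: "?m \<in> set (take s ks)" using r s by (auto simp: in_set_conv_nth intro!: exI[of _ r])
  have "?H \<ge> 0" using H_nonneg[OF SL lpos suffix_facts(1)[OF s] split_at(3)[OF s]] t by simp
  have Ami: "A (ks ! s) ?m = -1" using r(2) adj_sym[OF SL] SL_adj[OF SL] by metis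
  have "Gf A l ks ?m t * real_of_int (- A (ks ! s) ?m) \<le> (\<Sum>m\<in>set (take s ks). Gf A l ks m t * real_of_int (- A (ks ! s) m))"
    by (rule member_le_sum) (use mT take_terms_nonneg[OF s] in auto)
  moreover have "Gf A l ks (ks ! s) t \<le> Gf A l ks ?m t" using G_le_earlier[OF r(1) s r(2)] t by simp
  moreover have "Gf A l ks (ks ! s) t = clamp01 ?H" using G_at[OF s] by simp
  ultimately have "(\<Sum>m\<in>set (take s ks). Gf A l ks m t * real_of_int (- A (ks ! s) m)) \<ge> clamp01 ?H"
    using Ami by simp
  moreover have "?H - clamp01 ?H \<ge> 0" using \<open>?H \<ge> 0\<close> by (simp add: clamp01_def)
  ultimately show ?thesis using coord[OF s, of t] by simp
qed

lemma coord_hits_m1: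
  assumes s: "s < length ks" and nex: "\<not> (\<exists>r<s. dyn_adj A (ks ! r) (ks ! s))"
  shows "\<exists>t\<in>{0..1}. PG A l (Gf A l ks) t (ks ! s) = -1"
proof -
  let ?H = "\<lambda>t. PG A l (Gf A l (drop (Suc s) ks)) t (ks ! s)"
  have invD: "Inv A l (drop (Suc s) ks)" by (rule suffix_facts(1)[OF s])
  have zero: "(\<Sum>m\<in>set (take s ks). Gf A l ks m t * real_of_int (- A (ks ! s) m)) = 0" for t
  proof (rule sum.neutral, rule ballI)
    fix m assume m: "m \<in> set (take s ks)"
    then obtain r where r: "r < s" "m = ks ! r" using s by (auto simp: in_set_conv_nth)
    have "m \<noteq> ks ! s" using m split_at(2)[OF s] by auto
    moreover have "\<not> dyn_adj A (ks ! s) m" using nex r adj_sym[OF SL] by metis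
    ultimately have "A (ks ! s) m = 0" using SL_nadj[OF SL] by metis
    then show "Gf A l ks m t * real_of_int (- A (ks ! s) m) = 0" by simp
  qed
  have co: "continuous_on {0..1} ?H" by (rule continuous_on_subset[OF PG_cont[OF invD]]) simp
  obtain t0 where t0: "0 \<le> t0" "t0 \<le> 1" "?H t0 = 1"
    using IVT'[of ?H 0 1 1, OF _ suffix_facts(2)[OF s] _ co] PG_0[OF invD] by auto
  have "PG A l (Gf A l ks) t0 (ks ! s) = -1"
    using coord[OF s, of t0] zero[of t0] t0(3) by (simp add: clamp01_def)
  then show ?thesis using t0 by auto
qed

lemma coord_notin:
  assumes i: "i \<notin> set ks" and t: "t \<in> {0..1}"
  shows "PG A l (Gf A l ks) t i \<ge> 0"
  using H_nonneg[OF SL lpos inv_ks i] t by simp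

lemma mu_dom_iff:
  assumes mupos: "\<forall>i. \<mu> i \<ge> 0"
  shows "mu_dominant A \<mu> (PG A l (Gf A l ks)) \<longleftrightarrow>
     (\<forall>s<length ks. \<mu> (ks ! s) = 0 \<longrightarrow> (\<exists>r<s. dyn_adj A (ks ! r) (ks ! s)))"
proof
  assume md: "mu_dominant A \<mu> (PG A l (Gf A l ks))"
  show "\<forall>s<length ks. \<mu> (ks ! s) = 0 \<longrightarrow> (\<exists>r<s. dyn_adj A (ks ! r) (ks ! s))"
  proof (intro allI impI)
    fix s assume s: "s < length ks" and mu0: "\<mu> (ks ! s) = 0"
    show "\<exists>r<s. dyn_adj A (ks ! r) (ks ! s)"
    proof (rule ccontr)
      assume nex: "\<not> (\<exists>r<s. dyn_adj A (ks ! r) (ks ! s))"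
      obtain t0 where t0: "t0 \<in> {0..1}" "PG A l (Gf A l ks) t0 (ks ! s) = -1"
        using coord_hits_m1[OF s nex] by blast
      have "e_op A (ks ! s) (PG A l (Gf A l ks)) \<noteq> None"
        by (rule e_op_not_None[where c="-1", OF t0(1)]) (use t0 coord_ge_m1[OF s] in auto)
      moreover have "e_pow A (ks ! s) (nat (\<mu> (ks ! s) + 1)) (PG A l (Gf A l ks)) = None"
        using md by (simp add: mu_dominant_def)
      moreover have "nat (\<mu> (ks ! s) + 1) = 1" using mu0 by simp
      ultimately show False using e_pow_1[of A "ks ! s" "PG A l (Gf A l ks)"] by simp
    qed
  qed
next
  assume cond: "\<forall>s<length ks. \<mu> (ks ! s) = 0 \<longrightarrow> (\<exists>r<s. dyn_adj A (ks ! r) (ks ! s))"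
  let ?\<pi> = "PG A l (Gf A l ks)"
  show "mu_dominant A \<mu> ?\<pi>"
    unfolding mu_dominant_def
  proof
    fix i
    have n1: "nat (\<mu> i + 1) \<ge> 1" using mupos[rule_format, of i] by simp
    show "e_pow A i (nat (\<mu> i + 1)) ?\<pi> = None"
    proof (cases "i \<in> set ks")
      case False
      have "e_op A i ?\<pi> = None"
        by (rule e_op_None_if[where c=0]) (use coord_notin[OF False] in auto)
      then show ?thesis using e_pow_None_mono[OF _ n1] e_pow_1 by metis
    next
      case True
      then obtain s where s: "s < length ks" "i = ks ! s" by (auto simp: in_set_conv_nth)
      show ?thesis
      proof (cases "\<exists>r<s. dyn_adj A (ks ! r) (ks ! s)")
        case True
        have "e_op A i ?\<pi> = None"
          by (rule e_op_None_if[where c=0]) (use coord_ge_0[OF s(1) _ True] s(2) in auto)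
        then show ?thesis using e_pow_None_mono[OF _ n1] e_pow_1 by metis
      next
        case False
        then have "\<mu> i \<noteq> 0" using cond s by auto
        then have n2: "nat (\<mu> i + 1) \<ge> 2" using mupos[rule_format, of i] by simp
        have "e_pow A i 2 ?\<pi> = None"
        proof (cases "e_op A i ?\<pi>")
          case None
          then show ?thesis by (simp add: e_pow_def numeral_2_eq_2)
        next
          case (Some \<pi>')
          have "e_op A i \<pi>' = None"
          proof (rule e_op_twice[where \<pi>="?\<pi>" and i=i, OF _ _ _ _ Some])
            show "continuous_on {0..1} (\<lambda>t. ?\<pi> t i)"
              by (rule continuous_on_subset[OF PG_cont[OF inv_ks]]) simp
            show "?\<pi> 0 i = 0" by (rule PG_0[OF inv_ks])
            show "\<And>t. t \<in> {0..1} \<Longrightarrow> - 1 \<le> ?\<pi> t i" using coord_ge_m1[OF s(1)] s(2) by simp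
            show "A i i = 2" by (rule SL_diag[OF SL])
          qed
          then show ?thesis using Some by (simp add: e_pow_def numeral_2_eq_2)
        qed
        then show ?thesis using e_pow_None_mono[OF _ n2] by metis
      qed
    qed
  qed
qed

end

definition connT :: "('a \<Rightarrow> 'a \<Rightarrow> bool) \<Rightarrow> 'a set \<Rightarrow> bool" where
  "connT adj T \<longleftrightarrow> (\<forall>x\<in>T. \<forall>y\<in>T. (\<lambda>x y. x \<in> T \<and> y \<in> T \<and> adj x y)\<^sup>*\<^sup>* x y)"

definition forestP :: "('a \<Rightarrow> 'a \<Rightarrow> bool) \<Rightarrow> ('a \<Rightarrow> nat) \<Rightarrow> 'a set \<Rightarrow> bool" where
  "forestP adj rk S \<longleftrightarrow> (\<forall>v\<in>S. \<forall>u1\<in>S. \<forall>u2\<in>S. adj u1 v \<longrightarrow> adj u2 v \<longrightarrow> rk u1 < rk v \<longrightarrow> rk u2 < rk v \<longrightarrow> u1 = u2)"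

definition Rn :: "('a \<Rightarrow> 'a \<Rightarrow> bool) \<Rightarrow> ('a \<Rightarrow> int) \<Rightarrow> 'a set \<Rightarrow> 'a \<Rightarrow> bool" where
  "Rn adj \<tau> S v \<longleftrightarrow> (\<exists>m\<in>S. adj m v \<and> \<tau> v < \<tau> m)"

definition Ln :: "('a \<Rightarrow> 'a \<Rightarrow> bool) \<Rightarrow> ('a \<Rightarrow> int) \<Rightarrow> 'a set \<Rightarrow> 'a \<Rightarrow> bool" where
  "Ln adj \<tau> S v \<longleftrightarrow> (\<exists>m\<in>S. adj m v \<and> \<tau> m < \<tau> v)"

lemma forestP_subset: "forestP adj rk S \<Longrightarrow> T \<subseteq> S \<Longrightarrow> forestP adj rk T"
  unfolding forestP_def by blast

lemma connT_single: "connT adj {v}"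
  by (simp add: connT_def)

lemma rtranclp_set_mono:
  assumes "(\<lambda>x y. x \<in> T \<and> y \<in> T \<and> adj x y)\<^sup>*\<^sup>* x y" "T \<subseteq> U"
  shows "(\<lambda>x y. x \<in> U \<and> y \<in> U \<and> adj x y)\<^sup>*\<^sup>* x y"
  using assms(1)
proof (rule rtranclp_mono[THEN predicate2D, rotated])
  show "(\<lambda>x y. x \<in> T \<and> y \<in> T \<and> adj x y) \<le> (\<lambda>x y. x \<in> U \<and> y \<in> U \<and> adj x y)"
    using assms(2) by auto
qed

lemma leaf_exists:
  assumes fin: "finite T" and sym: "\<forall>x y. adj x y \<longleftrightarrow> adj y x" and irr: "\<forall>x. \<not> adj x x"
    and conn: "connT adj T" and forest: "forestP adj rk T" and inj: "inj_on rk T"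
    and two: "x0 \<in> T" "y0 \<in> T" "x0 \<noteq> y0"
  shows "\<exists>l\<in>T. \<exists>u\<in>T. adj l u \<and> l \<noteq> u \<and> (\<forall>w\<in>T. adj w l \<longrightarrow> w = u) \<and> connT adj (T - {l})"
proof -
  let ?R = "\<lambda>x y. x \<in> T \<and> y \<in> T \<and> adj x y"
  have ne: "rk ` T \<noteq> {}" using two by auto
  obtain l where l: "l \<in> T" "rk l = Max (rk ` T)" using Max_in[OF finite_imageI[OF fin] ne] by auto
  have lmax: "rk x \<le> rk l" if "x \<in> T" for x using l(2) fin that by simp
  obtain x where x: "x \<in> T" "x \<noteq> l" using two by blast
  have "?R\<^sup>*\<^sup>* l x" using conn l(1) x(1) by (simp add: connT_def)
  then obtain u where u: "?R l u"
    using x(2) by (cases rule: converse_rtranclpE) auto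
  then have uT: "u \<in> T" and adjlu: "adj l u" by auto
  have ul: "u \<noteq> l" using adjlu irr by auto
  have lt: "rk w < rk l" if "w \<in> T" "w \<noteq> l" for w
    using lmax[OF that(1)] inj l(1) that by (metis inj_on_contraD order_le_neq_trans)
  have uniq: "w = u" if "w \<in> T" "adj w l" for w
  proof -
    have "w \<noteq> l" using that irr by auto
    moreover have "adj u l" using adjlu sym by blast
    ultimately show ?thesis using forest l(1) uT that lt[OF that(1)] lt[OF uT ul]
      unfolding forestP_def by blast
  qed
  let ?R' = "\<lambda>x y. x \<in> T - {l} \<and> y \<in> T - {l} \<and> adj x y"
  have claim: "(z \<noteq> l \<longrightarrow> ?R'\<^sup>*\<^sup>* y z) \<and> (z = l \<longrightarrow> ?R'\<^sup>*\<^sup>* y u)"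
    if "?R\<^sup>*\<^sup>* y z" "y \<in> T" "y \<noteq> l" for y z
    using that(1)
  proof (induction rule: rtranclp_induct)
    case base
    then show ?case using that by auto
  next
    case (step z w)
    show ?case
    proof (cases "w = l")
      case True
      then have "z \<noteq> l" using step(2) irr by auto
      moreover have "z = u" using step(2) True uniq by auto
      ultimately show ?thesis using step(3) True by auto
    next
      case False
      show ?thesis
      proof (cases "z = l")
        case True
        then have "w = u" using step(2) uniq sym by blast
        then show ?thesis using step(3) True False by auto
      next
        case zl: False
        then have "?R'\<^sup>*\<^sup>* y z" using step(3) by auto
        moreover have "?R' z w" using step(2) zl False by auto
        ultimately have "?R'\<^sup>*\<^sup>* y w" by (rule rtranclp.rtrancl_into_rtrancl)
        then show ?thesis using False by simp
      qed
    qed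
  qed
  have "connT adj (T - {l})"
    unfolding connT_def
  proof (intro ballI)
    fix y z assume "y \<in> T - {l}" "z \<in> T - {l}"
    then show "?R'\<^sup>*\<^sup>* y z" using claim[of y z] conn by (auto simp: connT_def)
  qed
  then show ?thesis using l(1) uT adjlu ul uniq by blast
qed

lemma sum_upd_in:
  assumes "finite T" "u \<in> T"
  shows "(\<Sum>v\<in>T. (f(u := f u + (x::int))) v) = (\<Sum>v\<in>T. f v) + x"
proof -
  have "(\<Sum>v\<in>T. (f(u := f u + x)) v) = (\<Sum>v\<in>T. f v + (if v = u then x else 0))"
    by (rule sum.cong) auto
  also have "\<dots> = (\<Sum>v\<in>T. f v) + x" using assms by (simp add: sum.distrib)
  finally show ?thesis .
qed

lemma comb:
  fixes S :: "'a set" and a b c d :: "'a \<Rightarrow> int" and \<tau> :: "'a \<Rightarrow> int" and rk :: "'a \<Rightarrow> nat"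
  assumes fin: "finite S" and ne: "S \<noteq> {}"
    and sym: "\<forall>x y. adj x y \<longleftrightarrow> adj y x" and irr: "\<forall>x. \<not> adj x x"
    and conn: "connT adj S" and forest: "forestP adj rk S" and rkinj: "inj_on rk S"
    and nn: "\<forall>v\<in>S. a v \<ge> 0 \<and> b v \<ge> 0 \<and> c v \<ge> 0 \<and> d v \<ge> 0"
    and sums: "\<forall>v\<in>S. a v + b v = c v + d v"
    and roots: "\<forall>T. T \<subseteq> S \<longrightarrow> T \<noteq> {} \<longrightarrow> connT adj T \<longrightarrow>
                 \<bar>\<Sum>v\<in>T. a v - b v\<bar> \<le> \<bar>\<Sum>v\<in>T. c v - d v\<bar>"
    and tinj: "inj_on \<tau> S"
    and hyp: "\<forall>v\<in>S. (d v = 0 \<longrightarrow> Rn adj \<tau> S v) \<and> (c v = 0 \<longrightarrow> Ln adj \<tau> S v)"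
  shows "\<exists>\<tau>'. inj_on \<tau>' S \<and> (\<forall>v\<in>S. (b v = 0 \<longrightarrow> Rn adj \<tau>' S v) \<and> (a v = 0 \<longrightarrow> Ln adj \<tau>' S v))"
  using fin ne conn forest rkinj nn sums roots tinj hyp
proof (induction "card S" arbitrary: S a b c d \<tau> rule: less_induct)
  case less
  note fin = less.prems(1) and ne = less.prems(2) and conn = less.prems(3) and forest = less.prems(4)
    and rkinj = less.prems(5) and nn = less.prems(6) and sums = less.prems(7) and roots = less.prems(8)
    and tinj = less.prems(9) and hyp = less.prems(10)
  show ?case
  proof (cases "\<exists>x0\<in>S. \<exists>y0\<in>S. x0 \<noteq> y0")
    case False
    obtain v where v: "v \<in> S" using ne by blast
    then have Sv: "S = {v}" using False by blast
    have dv: "d v \<noteq> 0"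
    proof
      assume "d v = 0"
      then have "Rn adj \<tau> S v" using hyp v by blast
      then show False using Sv irr by (auto simp: Rn_def)
    qed
    have cv: "c v \<noteq> 0"
    proof
      assume "c v = 0"
      then have "Ln adj \<tau> S v" using hyp v by blast
      then show False using Sv irr by (auto simp: Ln_def)
    qed
    have "\<bar>a v - b v\<bar> \<le> \<bar>c v - d v\<bar>" using roots Sv connT_single[of adj v] by auto
    moreover have "a v \<ge> 0" "b v \<ge> 0" "c v \<ge> 0" "d v \<ge> 0" using nn v by auto
    moreover have "a v + b v = c v + d v" using sums v by auto
    ultimately have "a v \<noteq> 0" "b v \<noteq> 0" using dv cv by (auto simp: abs_if split: if_splits)
    then show ?thesis using tinj Sv by auto
  next
    case True
    then obtain x0 y0 where two: "x0 \<in> S" "y0 \<in> S" "x0 \<noteq> y0" by blast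
    obtain l u where lu: "l \<in> S" "u \<in> S" "adj l u" "l \<noteq> u" and uniq: "\<forall>w\<in>S. adj w l \<longrightarrow> w = u"
      and conn': "connT adj (S - {l})"
      using leaf_exists[OF fin sym irr conn forest rkinj two] by blast
    have adjul: "adj u l" using lu sym by blast
    define S' where "S' = S - {l}"
    have uS': "u \<in> S'" using lu by (simp add: S'_def)
    have lS': "l \<notin> S'" by (simp add: S'_def)
    have S'S: "S' \<subseteq> S" by (auto simp: S'_def)
    have nbr: "v = u" if "v \<in> S" "adj l v" for v using uniq that sym by blast
    define a' where "a' = a(u := a u + a l)"
    define b' where "b' = b(u := b u + b l)"
    define c' where "c' = c(u := c u + c l)"
    define d' where "d' = d(u := d u + d l)"
    have card: "card S' < card S" unfolding S'_def by (rule card_Diff1_less[OF fin lu(1)])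
    have nn': "\<forall>v\<in>S'. a' v \<ge> 0 \<and> b' v \<ge> 0 \<and> c' v \<ge> 0 \<and> d' v \<ge> 0"
      using nn S'S lu by (auto simp: a'_def b'_def c'_def d'_def)
    have sums': "\<forall>v\<in>S'. a' v + b' v = c' v + d' v"
    proof
      fix v assume v: "v \<in> S'"
      have e1: "a u + b u = c u + d u" using bspec[OF sums lu(2)] .
      have e2: "a l + b l = c l + d l" using bspec[OF sums lu(1)] .
      have e3: "a v + b v = c v + d v" using bspec[OF sums] S'S v by blast
      show "a' v + b' v = c' v + d' v"
      proof (cases "v = u")
        case True
        then have "a' v = a u + a l" "b' v = b u + b l" "c' v = c u + c l" "d' v = d u + d l"
          by (simp_all add: a'_def b'_def c'_def d'_def)
        then show ?thesis using e1 e2 by linarith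
      next
        case False
        then have "a' v = a v" "b' v = b v" "c' v = c v" "d' v = d v"
          by (simp_all add: a'_def b'_def c'_def d'_def)
        then show ?thesis using e3 by linarith
      qed
    qed
    have roots': "\<forall>T. T \<subseteq> S' \<longrightarrow> T \<noteq> {} \<longrightarrow> connT adj T \<longrightarrow>
                 \<bar>\<Sum>v\<in>T. a' v - b' v\<bar> \<le> \<bar>\<Sum>v\<in>T. c' v - d' v\<bar>"
    proof (intro allI impI)
      fix T assume T: "T \<subseteq> S'" "T \<noteq> {}" "connT adj T"
      have finT: "finite T" by (rule finite_subset[OF subset_trans[OF T(1) S'S] fin])
      show "\<bar>\<Sum>v\<in>T. a' v - b' v\<bar> \<le> \<bar>\<Sum>v\<in>T. c' v - d' v\<bar>"
      proof (cases "u \<in> T")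
        case False
        have e1: "(\<Sum>v\<in>T. a' v - b' v) = (\<Sum>v\<in>T. a v - b v)"
        proof (rule sum.cong[OF refl])
          fix v assume "v \<in> T" then have "v \<noteq> u" using False by blast
          then show "a' v - b' v = a v - b v" by (simp add: a'_def b'_def)
        qed
        have e2: "(\<Sum>v\<in>T. c' v - d' v) = (\<Sum>v\<in>T. c v - d v)"
        proof (rule sum.cong[OF refl])
          fix v assume "v \<in> T" then have "v \<noteq> u" using False by blast
          then show "c' v - d' v = c v - d v" by (simp add: c'_def d'_def)
        qed
        have TS: "T \<subseteq> S" using T(1) S'S by (rule subset_trans)
        have "\<bar>\<Sum>v\<in>T. a v - b v\<bar> \<le> \<bar>\<Sum>v\<in>T. c v - d v\<bar>"
          using roots TS T(2) T(3) by blast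
        then show ?thesis unfolding e1 e2 .
      next
        case True
        let ?T = "insert l T"
        have lT: "l \<notin> T" using T(1) lS' by auto
        have "(\<Sum>v\<in>T. a' v - b' v) = (\<Sum>v\<in>T. ((\<lambda>v. a v - b v)(u := (a u - b u) + (a l - b l))) v)"
          by (rule sum.cong[OF refl]) (simp add: a'_def b'_def)
        also have "\<dots> = (\<Sum>v\<in>T. a v - b v) + (a l - b l)"
          using sum_upd_in[OF finT True, of "\<lambda>v. a v - b v"] by simp
        also have "\<dots> = (\<Sum>v\<in>?T. a v - b v)" using finT lT by simp
        finally have ab: "(\<Sum>v\<in>T. a' v - b' v) = (\<Sum>v\<in>?T. a v - b v)" .
        have "(\<Sum>v\<in>T. c' v - d' v) = (\<Sum>v\<in>T. ((\<lambda>v. c v - d v)(u := (c u - d u) + (c l - d l))) v)"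
          by (rule sum.cong[OF refl]) (simp add: c'_def d'_def)
        also have "\<dots> = (\<Sum>v\<in>T. c v - d v) + (c l - d l)"
          using sum_upd_in[OF finT True, of "\<lambda>v. c v - d v"] by simp
        also have "\<dots> = (\<Sum>v\<in>?T. c v - d v)" using finT lT by simp
        finally have cd: "(\<Sum>v\<in>T. c' v - d' v) = (\<Sum>v\<in>?T. c v - d v)" .
        have connI: "connT adj ?T"
          unfolding connT_def
        proof (intro ballI)
          let ?R = "\<lambda>x y. x \<in> T \<and> y \<in> T \<and> adj x y"
          let ?Q = "\<lambda>x y. x \<in> ?T \<and> y \<in> ?T \<and> adj x y"
          have mono: "?Q\<^sup>*\<^sup>* x y" if "x \<in> T" "y \<in> T" for x y
          proof -
            have "?R\<^sup>*\<^sup>* x y" using T(3) that unfolding connT_def by blast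
            moreover have "T \<subseteq> ?T" by blast
            ultimately show ?thesis by (rule rtranclp_set_mono)
          qed
          have lu1: "?Q l u" using lu True by auto
          have lu2: "?Q u l" using adjul True by auto
          fix x y assume x: "x \<in> ?T" and y: "y \<in> ?T"
          show "?Q\<^sup>*\<^sup>* x y"
          proof (cases "x = l")
            case True
            show ?thesis
            proof (cases "y = l")
              case True then show ?thesis using \<open>x = l\<close> by simp
            next
              case False
              then have "?Q\<^sup>*\<^sup>* u y" using mono[of u y] \<open>u \<in> T\<close> y by auto
              then show ?thesis using lu1 \<open>x = l\<close> by (simp add: converse_rtranclp_into_rtranclp)
            qed
          next
            case False
            then have xT: "x \<in> T" using x by auto
            show ?thesis
            proof (cases "y = l")
              case True
              have "?Q\<^sup>*\<^sup>* x u" using mono[of x u] \<open>u \<in> T\<close> xT by auto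
              then show ?thesis using lu2 True by (simp add: rtranclp.rtrancl_into_rtrancl)
            next
              case False
              then show ?thesis using mono[of x y] xT y by auto
            qed
          qed
        qed
        have "?T \<subseteq> S" using T(1) S'S lu(1) by blast
        moreover have "?T \<noteq> {}" by blast
        ultimately have "\<bar>\<Sum>v\<in>?T. a v - b v\<bar> \<le> \<bar>\<Sum>v\<in>?T. c v - d v\<bar>" using roots connI by blast
        then show ?thesis using ab cd by simp
      qed
    qed
    have tinj': "inj_on \<tau> S'" using tinj S'S inj_on_subset by blast
    have hyp': "\<forall>v\<in>S'. (d' v = 0 \<longrightarrow> Rn adj \<tau> S' v) \<and> (c' v = 0 \<longrightarrow> Ln adj \<tau> S' v)"
    proof (intro ballI conjI impI)
      fix v assume v: "v \<in> S'" and dv: "d' v = 0"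
      show "Rn adj \<tau> S' v"
      proof (cases "v = u")
        case False
        then have "d v = 0" using dv by (simp add: d'_def)
        then obtain m where m: "m \<in> S" "adj m v" "\<tau> v < \<tau> m" using hyp v S'S by (auto simp: Rn_def)
        have "m \<noteq> l" using m(2) nbr v S'S False by blast
        then show ?thesis using m by (auto simp: Rn_def S'_def)
      next
        case True
        then have "d u + d l = 0" using dv by (simp add: d'_def)
        moreover have "d u \<ge> 0" "d l \<ge> 0" using bspec[OF nn lu(1)] bspec[OF nn lu(2)] by auto
        ultimately have "d u = 0" "d l = 0" by linarith+
        then have "Rn adj \<tau> S l" "Rn adj \<tau> S u" using hyp lu by auto
        then have "\<tau> l < \<tau> u" using nbr sym by (auto simp: Rn_def)
        obtain m where m: "m \<in> S" "adj m u" "\<tau> u < \<tau> m" using \<open>Rn adj \<tau> S u\<close> by (auto simp: Rn_def)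
        have "m \<noteq> l" using m(3) \<open>\<tau> l < \<tau> u\<close> by auto
        then show ?thesis using m True by (auto simp: Rn_def S'_def)
      qed
    next
      fix v assume v: "v \<in> S'" and cv: "c' v = 0"
      show "Ln adj \<tau> S' v"
      proof (cases "v = u")
        case False
        then have "c v = 0" using cv by (simp add: c'_def)
        then obtain m where m: "m \<in> S" "adj m v" "\<tau> m < \<tau> v" using hyp v S'S by (auto simp: Ln_def)
        have "m \<noteq> l" using m(2) nbr v S'S False by blast
        then show ?thesis using m by (auto simp: Ln_def S'_def)
      next
        case True
        then have "c u + c l = 0" using cv by (simp add: c'_def)
        moreover have "c u \<ge> 0" "c l \<ge> 0" using bspec[OF nn lu(1)] bspec[OF nn lu(2)] by auto
        ultimately have "c u = 0" "c l = 0" by linarith+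
        then have "Ln adj \<tau> S l" "Ln adj \<tau> S u" using hyp lu by auto
        then have "\<tau> u < \<tau> l" using nbr sym by (auto simp: Ln_def)
        obtain m where m: "m \<in> S" "adj m u" "\<tau> m < \<tau> u" using \<open>Ln adj \<tau> S u\<close> by (auto simp: Ln_def)
        have "m \<noteq> l" using m(3) \<open>\<tau> u < \<tau> l\<close> by auto
        then show ?thesis using m True by (auto simp: Ln_def S'_def)
      qed
    qed
    have finS': "finite S'" using fin by (simp add: S'_def)
    have neS': "S' \<noteq> {}" using uS' by auto
    have forest': "forestP adj rk S'" using forest S'S forestP_subset by blast
    have rkinj': "inj_on rk S'" using rkinj S'S inj_on_subset by blast
    obtain \<tau>'' where t'': "inj_on \<tau>'' S'"
      and sol: "\<forall>v\<in>S'. (b' v = 0 \<longrightarrow> Rn adj \<tau>'' S' v) \<and> (a' v = 0 \<longrightarrow> Ln adj \<tau>'' S' v)"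
      using less.hyps[OF card finS' neS' conn'[folded S'_def] forest' rkinj' nn' sums' roots' tinj' hyp']
      by blast
    \<comment> \<open>the leaf cannot need both directions\<close>
    have not_both_l: "\<not> (a l = 0 \<and> b l = 0)"
    proof
      assume "a l = 0 \<and> b l = 0"
      then have "c l = 0" "d l = 0" using sums nn lu by force+
      then have "Rn adj \<tau> S l" "Ln adj \<tau> S l" using hyp lu by auto
      then obtain m1 m2 where m: "m1 \<in> S" "adj m1 l" "\<tau> l < \<tau> m1" "m2 \<in> S" "adj m2 l" "\<tau> m2 < \<tau> l"
        by (auto simp: Rn_def Ln_def)
      then have "m1 = u" "m2 = u" using uniq by auto
      then show False using m by simp
    qed
    define lo where "lo = Min (\<tau>'' ` S') - 1"
    define hi where "hi = Max (\<tau>'' ` S') + 1"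
    have lo_lt: "lo < \<tau>'' v" if "v \<in> S'" for v
    proof -
      have "Min (\<tau>'' ` S') \<le> \<tau>'' v" using that finS' by (intro Min_le) auto
      then show ?thesis by (simp add: lo_def)
    qed
    have hi_gt: "\<tau>'' v < hi" if "v \<in> S'" for v
    proof -
      have "\<tau>'' v \<le> Max (\<tau>'' ` S')" using that finS' by (intro Max_ge) auto
      then show ?thesis by (simp add: hi_def)
    qed
    define front where "front \<longleftrightarrow> b l = 0 \<or> (a l \<noteq> 0 \<and> b l \<noteq> 0 \<and> a u = 0 \<and> \<not> Ln adj \<tau>'' S' u)"
    define \<tau>' where "\<tau>' = \<tau>''(l := if front then lo else hi)"
    have t'eq: "\<tau>' v = \<tau>'' v" if "v \<in> S'" for v using that lS' by (auto simp: \<tau>'_def)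
    have S_eq: "S = insert l S'" using lu(1) by (auto simp: S'_def)
    have inj': "inj_on \<tau>' S"
    proof -
      have "inj_on \<tau>' S'" using t'' t'eq by (metis inj_on_cong)
      moreover have "\<tau>' l \<notin> \<tau>' ` S'"
        using lo_lt hi_gt t'eq by (auto simp: \<tau>'_def)
      ultimately show ?thesis using S_eq lS' by simp
    qed
    have Rmono: "Rn adj \<tau>' S v" if "Rn adj \<tau>'' S' v" "v \<in> S'" for v
      using that t'eq S'S by (auto simp: Rn_def)
    have Lmono: "Ln adj \<tau>' S v" if "Ln adj \<tau>'' S' v" "v \<in> S'" for v
      using that t'eq S'S by (auto simp: Ln_def)
    have front_lu: "\<tau>' l < \<tau>' u" if front using that uS' lo_lt t'eq by (simp add: \<tau>'_def)
    have back_lu: "\<tau>' u < \<tau>' l" if "\<not> front" using that uS' hi_gt t'eq lu(4) by (simp add: \<tau>'_def)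
    have good: "\<forall>v\<in>S. (b v = 0 \<longrightarrow> Rn adj \<tau>' S v) \<and> (a v = 0 \<longrightarrow> Ln adj \<tau>' S v)"
    proof (intro ballI conjI impI)
      fix v assume vS: "v \<in> S" and bv: "b v = 0"
      show "Rn adj \<tau>' S v"
      proof (cases "v = l")
        case True
        then have front using bv by (simp add: front_def)
        then show ?thesis using True front_lu lu adjul by (auto simp: Rn_def)
      next
        case vl: False
        show ?thesis
        proof (cases "v = u")
          case False
          then have "b' v = 0" "v \<in> S'" using bv vS vl by (auto simp: b'_def S'_def)
          then show ?thesis using sol Rmono by blast
        next
          case True
          show ?thesis
          proof (cases front)
            case False
            then show ?thesis using True back_lu lu by (auto simp: Rn_def)
          next
            case fr: True
            show ?thesis
            proof (cases "b l = 0")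
              case True
              then have "b' u = 0" using bv \<open>v = u\<close> by (simp add: b'_def)
              then show ?thesis using sol Rmono uS' \<open>v = u\<close> by blast
            next
              case False
              then have au: "a u = 0" and nL: "\<not> Ln adj \<tau>'' S' u" using fr by (auto simp: front_def)
              then have "c u = 0" "d u = 0" using sums nn lu bv \<open>v = u\<close> by force+
              then have "Rn adj \<tau> S u" "Ln adj \<tau> S u" using hyp lu by auto
              then obtain m1 m2 where m: "m1 \<in> S" "adj m1 u" "\<tau> u < \<tau> m1" "m2 \<in> S" "adj m2 u" "\<tau> m2 < \<tau> u"
                by (auto simp: Rn_def Ln_def)
              then have "m1 \<noteq> m2" by auto
              then obtain w where w: "w \<in> S'" "adj w u" using m by (auto simp: S'_def)
              have "w \<noteq> u" using w irr by auto
              then have "\<tau>'' w \<noteq> \<tau>'' u" using t'' w uS' by (meson inj_on_contraD)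
              moreover have "\<not> \<tau>'' w < \<tau>'' u" using nL w by (auto simp: Ln_def)
              ultimately have "\<tau>'' u < \<tau>'' w" by simp
              then have "Rn adj \<tau>'' S' u" using w by (auto simp: Rn_def)
              then show ?thesis using Rmono uS' \<open>v = u\<close> by blast
            qed
          qed
        qed
      qed
    next
      fix v assume vS: "v \<in> S" and av: "a v = 0"
      show "Ln adj \<tau>' S v"
      proof (cases "v = l")
        case True
        then have "b l \<noteq> 0" using not_both_l av by auto
        then have "\<not> front" using av True by (auto simp: front_def)
        then show ?thesis using True back_lu lu adjul by (auto simp: Ln_def)
      next
        case vl: False
        show ?thesis
        proof (cases "v = u")
          case False
          then have "a' v = 0" "v \<in> S'" using av vS vl by (auto simp: a'_def S'_def)
          then show ?thesis using sol Lmono by blast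
        next
          case True
          show ?thesis
          proof (cases front)
            case True
            then show ?thesis using \<open>v = u\<close> front_lu lu by (auto simp: Ln_def)
          next
            case False
            then have "b l \<noteq> 0" by (auto simp: front_def)
            show ?thesis
            proof (cases "a l = 0")
              case True
              then have "a' u = 0" using av \<open>v = u\<close> by (simp add: a'_def)
              then show ?thesis using sol Lmono uS' \<open>v = u\<close> by blast
            next
              case False
              then have "Ln adj \<tau>'' S' u" using \<open>\<not> front\<close> \<open>b l \<noteq> 0\<close> av \<open>v = u\<close> by (auto simp: front_def)
              then show ?thesis using Lmono uS' \<open>v = u\<close> by blast
            qed
          qed
        qed
      qed
    qed
    show ?thesis using inj' good by blast
  qed
qed

definition rE :: "nat \<Rightarrow> nat" where
  "rE x = (if x = 2 then 4 else if x = 3 then 2 else if x = 4 then 3 else x)"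

lemma edgeA_forest: "edge_A n b1 a \<Longrightarrow> edge_A n b2 a \<Longrightarrow> b1 < a \<Longrightarrow> b2 < a \<Longrightarrow> b1 = b2"
  by (auto simp: edge_A_def)

lemma edgeD_lt: "edge_D n b a \<Longrightarrow> b < a \<Longrightarrow> 4 \<le> n \<Longrightarrow> (a \<le> n - 1 \<and> b = a - 1) \<or> (a = n \<and> b = n - 2)"
proof -
  assume e: "edge_D n b a" and ba: "b < a" and n: "4 \<le> n"
  from e have "(\<exists>k. 1 \<le> k \<and> k \<le> n - 2 \<and> {b, a} = {k, k + 1}) \<or> {b, a} = {n - 2, n}"
    by (simp add: edge_D_def)
  then show ?thesis
  proof
    assume "\<exists>k. 1 \<le> k \<and> k \<le> n - 2 \<and> {b, a} = {k, k + 1}"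
    then obtain k where k: "1 \<le> k" "k \<le> n - 2" "{b, a} = {k, k + 1}" by blast
    then have "b = k \<and> a = k + 1" using ba by (auto simp: doubleton_eq_iff)
    then show ?thesis using k n by auto
  next
    assume "{b, a} = {n - 2, n}"
    then have "b = n - 2 \<and> a = n" using ba n by (auto simp: doubleton_eq_iff)
    then show ?thesis by auto
  qed
qed

lemma edgeD_forest: "4 \<le> n \<Longrightarrow> edge_D n b1 a \<Longrightarrow> edge_D n b2 a \<Longrightarrow> b1 < a \<Longrightarrow> b2 < a \<Longrightarrow> b1 = b2"
  using edgeD_lt[of n b1 a] edgeD_lt[of n b2 a] by auto

lemma edgeE_char:
  "edge_E n x y \<longleftrightarrow> x \<in> {1..n} \<and> y \<in> {1..n} \<and>
     ((x = 1 \<and> y = 3) \<or> (x = 3 \<and> y = 1) \<or> (x = 2 \<and> y = 4) \<or> (x = 4 \<and> y = 2) \<or>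
      (3 \<le> x \<and> x \<le> n - 1 \<and> y = x + 1) \<or> (3 \<le> y \<and> y \<le> n - 1 \<and> x = y + 1))"
proof -
  have "(\<exists>k. 3 \<le> k \<and> k \<le> n - 1 \<and> {x, y} = {k, k + 1}) \<longleftrightarrow>
        (3 \<le> x \<and> x \<le> n - 1 \<and> y = x + 1) \<or> (3 \<le> y \<and> y \<le> n - 1 \<and> x = y + 1)"
    by (auto simp: doubleton_eq_iff)
  moreover have "{x, y} = {1, 3} \<longleftrightarrow> (x = 1 \<and> y = 3) \<or> (x = 3 \<and> y = 1)"
    by (auto simp: doubleton_eq_iff)
  moreover have "{x, y} = {2, 4} \<longleftrightarrow> (x = 2 \<and> y = 4) \<or> (x = 4 \<and> y = 2)"
    by (auto simp: doubleton_eq_iff)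
  ultimately show ?thesis by (auto simp: edge_E_def)
qed

lemma edgeE_forest:
  assumes n: "n \<le> 8" and e: "edge_E n b1 a" "edge_E n b2 a" and lt: "rE b1 < rE a" "rE b2 < rE a"
  shows "b1 = b2"
proof -
  have a: "a \<in> {1..8}" using e(1) n by (auto simp: edgeE_char)
  then have "a = 1 \<or> a = 2 \<or> a = 3 \<or> a = 4 \<or> a = 5 \<or> a = 6 \<or> a = 7 \<or> a = 8" by auto
  then show ?thesis using e lt by (auto simp: edgeE_char rE_def)
qed

lemma rE_inj: "inj rE"
  by (rule injI) (auto simp: rE_def split: if_splits)

lemma ADE_forest:
  assumes "connected_type_ADE A S"
  shows "\<exists>rk. forestP (dyn_adj A) rk S \<and> inj_on rk S"
proof -
  have transfer: "\<exists>rk. forestP (dyn_adj A) rk S \<and> inj_on rk S"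
    if iso: "diagram_iso A S n E" and r: "inj r"
      and nf: "\<And>a b1 b2. a \<in> {1..n} \<Longrightarrow> b1 \<in> {1..n} \<Longrightarrow> b2 \<in> {1..n} \<Longrightarrow> E b1 a \<Longrightarrow> E b2 a
               \<Longrightarrow> r b1 < r a \<Longrightarrow> r b2 < r a \<Longrightarrow> b1 = b2"
    for n E and r :: "nat \<Rightarrow> nat"
  proof -
    obtain \<phi> where bij: "bij_betw \<phi> {1..n} S" and adj: "\<forall>a\<in>{1..n}. \<forall>b\<in>{1..n}. dyn_adj A (\<phi> a) (\<phi> b) \<longleftrightarrow> E a b"
      using iso by (auto simp: diagram_iso_def)
    define \<psi> where "\<psi> = the_inv_into {1..n} \<phi>"
    have \<psi>1: "\<psi> v \<in> {1..n}" "\<phi> (\<psi> v) = v" if vS: "v \<in> S" for v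
    proof -
      have inj: "inj_on \<phi> {1..n}" and im: "\<phi> ` {1..n} = S" using bij by (auto simp: bij_betw_def)
      obtain x where x: "x \<in> {1..n}" "v = \<phi> x" using vS im by blast
      have "\<psi> v = x" unfolding \<psi>_def x(2) by (rule the_inv_into_f_f[OF inj x(1)])
      then show "\<psi> v \<in> {1..n}" "\<phi> (\<psi> v) = v" using x by auto
    qed
    have injS: "inj_on \<psi> S"
      using bij unfolding \<psi>_def bij_betw_def by (metis inj_on_the_inv_into)
    define rk where "rk = r \<circ> \<psi>"
    have "forestP (dyn_adj A) rk S"
      unfolding forestP_def
    proof (intro ballI impI)
      fix v u1 u2 assume v: "v \<in> S" and u: "u1 \<in> S" "u2 \<in> S"
        and a1: "dyn_adj A u1 v" and a2: "dyn_adj A u2 v" and l1: "rk u1 < rk v" and l2: "rk u2 < rk v"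
      have "E (\<psi> u1) (\<psi> v)" using adj \<psi>1[OF v] \<psi>1[OF u(1)] a1 by metis
      moreover have "E (\<psi> u2) (\<psi> v)" using adj \<psi>1[OF v] \<psi>1[OF u(2)] a2 by metis
      ultimately have "\<psi> u1 = \<psi> u2" using nf[OF \<psi>1(1)[OF v] \<psi>1(1)[OF u(1)] \<psi>1(1)[OF u(2)]] l1 l2
        by (simp add: rk_def)
      then show "u1 = u2" using \<psi>1(2)[OF u(1)] \<psi>1(2)[OF u(2)] by metis
    qed
    moreover have "inj_on rk S" unfolding rk_def using r injS
      by (simp add: comp_inj_on inj_on_subset)
    ultimately show ?thesis by blast
  qed
  from assms obtain n where
    "(n \<ge> 1 \<and> diagram_iso A S n (edge_A n)) \<or> (n \<ge> 4 \<and> diagram_iso A S n (edge_D n)) \<or>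
     (n \<in> {6, 7, 8} \<and> diagram_iso A S n (edge_E n))"
    by (auto simp: connected_type_ADE_def)
  then show ?thesis
  proof (elim disjE conjE)
    assume "diagram_iso A S n (edge_A n)"
    then show ?thesis by (rule transfer[where r=id]) (auto dest: edgeA_forest)
  next
    assume "n \<ge> 4" "diagram_iso A S n (edge_D n)"
    then show ?thesis by (intro transfer[where r=id and E="edge_D n" and n=n]) (auto dest: edgeD_forest)
  next
    assume "n \<in> {6, 7, 8}" "diagram_iso A S n (edge_E n)"
    then have "n \<le> 8" by auto
    then show ?thesis using \<open>diagram_iso A S n (edge_E n)\<close>
      by (intro transfer[where r=rE and E="edge_E n" and n=n]) (auto intro: rE_inj dest: edgeE_forest)
  qed
qed

definition ind :: "'i set \<Rightarrow> 'i \<Rightarrow> int" where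
  "ind T = (\<lambda>j. if j \<in> T then 1 else 0)"

lemma root_in_W:
  fixes A :: "'i::finite \<Rightarrow> 'i \<Rightarrow> int"
  assumes SL: "simply_laced_GCM A"
  shows "T \<noteq> {} \<Longrightarrow> connT (dyn_adj A) T \<Longrightarrow> forestP (dyn_adj A) rk T \<Longrightarrow> inj_on rk T
    \<Longrightarrow> ind T \<in> W_orbit A (range simple_root)"
proof (induction "card T" arbitrary: T rule: less_induct)
  case less
  have fin: "finite T" by simp
  have sym: "\<forall>x y. dyn_adj A x y \<longleftrightarrow> dyn_adj A y x" using adj_sym[OF SL] by blast
  have irr: "\<forall>x. \<not> dyn_adj A x x" by (simp add: dyn_adj_def)
  show ?case
  proof (cases "\<exists>x0\<in>T. \<exists>y0\<in>T. x0 \<noteq> y0")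
    case False
    obtain v where v: "v \<in> T" using less.prems(1) by blast
    then have "T = {v}" using False by blast
    then have "ind T = simple_root v" by (auto simp: ind_def simple_root_def)
    then show ?thesis by (auto intro: W_orbit.base)
  next
    case True
    then obtain x0 y0 where two: "x0 \<in> T" "y0 \<in> T" "x0 \<noteq> y0" by blast
    obtain l u where lu: "l \<in> T" "u \<in> T" "dyn_adj A l u" "l \<noteq> u" and uniq: "\<forall>w\<in>T. dyn_adj A w l \<longrightarrow> w = u"
      and conn': "connT (dyn_adj A) (T - {l})"
      using leaf_exists[OF fin sym irr less.prems(2) less.prems(3) less.prems(4) two] by blast
    have card: "card (T - {l}) < card T" by (rule card_Diff1_less[OF fin lu(1)])
    have ne': "T - {l} \<noteq> {}" using lu by auto
    have f': "forestP (dyn_adj A) rk (T - {l})" using less.prems(3) forestP_subset by blast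
    have i': "inj_on rk (T - {l})" using less.prems(4) inj_on_subset by blast
    have IH: "ind (T - {l}) \<in> W_orbit A (range simple_root)"
      using less.hyps[OF card ne' conn' f' i'] .
    have cp: "coroot_pair A (ind (T - {l})) l = -1"
    proof -
      have "(\<Sum>j\<in>UNIV. ind (T - {l}) j * A l j) = (\<Sum>j\<in>UNIV. if j = u then -1 else 0)"
      proof (rule sum.cong[OF refl])
        fix j :: 'i
        show "ind (T - {l}) j * A l j = (if j = u then -1 else 0)"
        proof (cases "j = u")
          case True
          have "A l u = -1" using lu(3) SL_adj[OF SL] by auto
          then show ?thesis using True lu by (simp add: ind_def)
        next
          case False
          show ?thesis
          proof (cases "j \<in> T - {l}")
            case True
            then have "\<not> dyn_adj A j l" using uniq False by auto
            then have "\<not> dyn_adj A l j" using adj_sym[OF SL] by blast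
            moreover have "l \<noteq> j" using True by auto
            ultimately have "A l j = 0" using SL_nadj[OF SL] by blast
            then show ?thesis using False by simp
          next
            case False
            then have "ind (T - {l}) j = 0" by (simp add: ind_def)
            then show ?thesis using \<open>j \<noteq> u\<close> by simp
          qed
        qed
      qed
      then show ?thesis by (simp add: coroot_pair_def)
    qed
    have "simple_refl A l (ind (T - {l})) = ind T"
      unfolding simple_refl_def cp using lu(1) by (auto simp: ind_def)
    then show ?thesis using W_orbit.step[OF IH, of l] by simp
  qed
qed

lemma root_in_pos:
  fixes A :: "'i::finite \<Rightarrow> 'i \<Rightarrow> int"
  assumes SL: "simply_laced_GCM A" "T \<noteq> {}" "connT (dyn_adj A) T" "forestP (dyn_adj A) rk T" "inj_on rk T"
  shows "ind T \<in> positive_roots A"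
  using root_in_W[OF assms] by (auto simp: positive_roots_def ind_def)

lemma wt_ind: "wt_coroot w (ind T) = (\<Sum>i\<in>T. w i)"
proof -
  have "wt_coroot w (ind T) = (\<Sum>i\<in>UNIV. if i \<in> T then w i else 0)"
    unfolding wt_coroot_def by (rule sum.cong) (auto simp: ind_def)
  also have "\<dots> = (\<Sum>i\<in>{i\<in>UNIV. i \<in> T}. w i)" by (rule sum.inter_filter[symmetric]) simp
  finally show ?thesis by simp
qed

definition ord_compat :: "('a \<Rightarrow> int) \<Rightarrow> 'a list \<Rightarrow> bool" where
  "ord_compat \<tau> w \<longleftrightarrow> (\<forall>i<length w. \<forall>j<length w. (i < j \<longleftrightarrow> \<tau> (w ! i) < \<tau> (w ! j)))"

lemma oc_iff: "ord_compat \<tau> w \<Longrightarrow> i < length w \<Longrightarrow> j < length w \<Longrightarrow> (i < j \<longleftrightarrow> \<tau> (w ! i) < \<tau> (w ! j))"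
  by (simp add: ord_compat_def)

lemma conv_R:
  assumes oc: "ord_compat \<tau> w" and sl: "s < length w"
  shows "(\<exists>r. s < r \<and> r < length w \<and> adj (w ! r) (w ! s)) \<longleftrightarrow> Rn adj \<tau> (set w) (w ! s)"
proof
  assume "\<exists>r. s < r \<and> r < length w \<and> adj (w ! r) (w ! s)"
  then obtain r where r: "s < r" "r < length w" "adj (w ! r) (w ! s)" by blast
  then have "\<tau> (w ! s) < \<tau> (w ! r)" using oc_iff[OF oc sl r(2)] by simp
  then show "Rn adj \<tau> (set w) (w ! s)" using r by (auto simp: Rn_def)
next
  assume "Rn adj \<tau> (set w) (w ! s)"
  then obtain m where m: "m \<in> set w" "adj m (w ! s)" "\<tau> (w ! s) < \<tau> m" by (auto simp: Rn_def)
  then obtain r where r: "r < length w" "m = w ! r" by (auto simp: in_set_conv_nth)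
  then have "s < r" using oc_iff[OF oc sl r(1)] m(3) by simp
  then show "\<exists>r. s < r \<and> r < length w \<and> adj (w ! r) (w ! s)" using r m by blast
qed

lemma conv_L:
  assumes oc: "ord_compat \<tau> w" and sl: "s < length w"
  shows "(\<exists>r<s. adj (w ! r) (w ! s)) \<longleftrightarrow> Ln adj \<tau> (set w) (w ! s)"
proof
  assume "\<exists>r<s. adj (w ! r) (w ! s)"
  then obtain r where r: "r < s" "adj (w ! r) (w ! s)" by blast
  then have "\<tau> (w ! r) < \<tau> (w ! s)" using oc_iff[OF oc _ sl, of r] sl by simp
  then show "Ln adj \<tau> (set w) (w ! s)" using r sl by (auto simp: Ln_def)
next
  assume "Ln adj \<tau> (set w) (w ! s)"
  then obtain m where m: "m \<in> set w" "adj m (w ! s)" "\<tau> m < \<tau> (w ! s)" by (auto simp: Ln_def)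
  then obtain r where r: "r < length w" "m = w ! r" by (auto simp: in_set_conv_nth)
  then have "r < s" using oc_iff[OF oc r(1) sl] m(3) by simp
  then show "\<exists>r<s. adj (w ! r) (w ! s)" using r m by blast
qed

lemma ord_compat_inj: "ord_compat \<tau> w \<Longrightarrow> inj_on \<tau> (set w)"
proof (rule inj_onI)
  fix x y assume oc: "ord_compat \<tau> w" and x: "x \<in> set w" and y: "y \<in> set w" and e: "\<tau> x = \<tau> y"
  obtain i j where "i < length w" "x = w ! i" "j < length w" "y = w ! j" using x y by (auto simp: in_set_conv_nth)
  moreover have "i = j"
  proof (rule ccontr)
    assume "i \<noteq> j"
    then have "i < j \<or> j < i" by arith
    then show False using oc_iff[OF oc \<open>i < length w\<close> \<open>j < length w\<close>] oc_iff[OF oc \<open>j < length w\<close> \<open>i < length w\<close>]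
      e \<open>x = w ! i\<close> \<open>y = w ! j\<close> by auto
  qed
  ultimately show "x = y" by simp
qed

lemma okF_nth:
  assumes lpos: "\<forall>i. l i \<ge> 0"
  shows "okF A l ks \<longleftrightarrow> (\<forall>s<length ks. l (ks ! s) = 0 \<longrightarrow> (\<exists>r. s < r \<and> r < length ks \<and> dyn_adj A (ks ! r) (ks ! s)))"
proof (induction ks)
  case Nil then show ?case by simp
next
  case (Cons k ks)
  have lk: "l k \<ge> 1 \<longleftrightarrow> l k \<noteq> 0" using lpos[rule_format, of k] by linarith
  have head: "(l k = 0 \<longrightarrow> (\<exists>r. 0 < r \<and> r < length (k # ks) \<and> dyn_adj A ((k # ks) ! r) k))
      \<longleftrightarrow> (l k \<ge> 1 \<or> (\<exists>m\<in>set ks. dyn_adj A m k))"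
  proof -
    have "(\<exists>r. 0 < r \<and> r < length (k # ks) \<and> dyn_adj A ((k # ks) ! r) k) \<longleftrightarrow> (\<exists>m\<in>set ks. dyn_adj A m k)"
    proof
      assume "\<exists>r. 0 < r \<and> r < length (k # ks) \<and> dyn_adj A ((k # ks) ! r) k"
      then obtain r where r: "0 < r" "r < length (k # ks)" "dyn_adj A ((k # ks) ! r) k" by blast
      then obtain r' where "r = Suc r'" using gr0_conv_Suc by blast
      then have "r' < length ks" "dyn_adj A (ks ! r') k" using r by auto
      then show "\<exists>m\<in>set ks. dyn_adj A m k" using nth_mem by blast
    next
      assume "\<exists>m\<in>set ks. dyn_adj A m k"
      then obtain r' where "r' < length ks" "dyn_adj A (ks ! r') k" by (auto simp: in_set_conv_nth)
      then show "\<exists>r. 0 < r \<and> r < length (k # ks) \<and> dyn_adj A ((k # ks) ! r) k"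
        by (intro exI[of _ "Suc r'"]) auto
    qed
    then show ?thesis using lk by auto
  qed
  have tail: "(\<forall>s<length ks. l ((k # ks) ! Suc s) = 0 \<longrightarrow> (\<exists>r. Suc s < r \<and> r < length (k # ks) \<and> dyn_adj A ((k # ks) ! r) ((k # ks) ! Suc s)))
     \<longleftrightarrow> (\<forall>s<length ks. l (ks ! s) = 0 \<longrightarrow> (\<exists>r. s < r \<and> r < length ks \<and> dyn_adj A (ks ! r) (ks ! s)))"
  proof -
    have "(\<exists>r. Suc s < r \<and> r < length (k # ks) \<and> dyn_adj A ((k # ks) ! r) (ks ! s))
        \<longleftrightarrow> (\<exists>r. s < r \<and> r < length ks \<and> dyn_adj A (ks ! r) (ks ! s))" for s
    proof
      assume "\<exists>r. Suc s < r \<and> r < length (k # ks) \<and> dyn_adj A ((k # ks) ! r) (ks ! s)"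
      then obtain r where r: "Suc s < r" "r < length (k # ks)" "dyn_adj A ((k # ks) ! r) (ks ! s)" by blast
      then obtain r' where "r = Suc r'" by (metis Suc_lessE)
      then show "\<exists>r. s < r \<and> r < length ks \<and> dyn_adj A (ks ! r) (ks ! s)" using r by auto
    next
      assume "\<exists>r. s < r \<and> r < length ks \<and> dyn_adj A (ks ! r) (ks ! s)"
      then obtain r where "s < r" "r < length ks" "dyn_adj A (ks ! r) (ks ! s)" by blast
      then show "\<exists>r. Suc s < r \<and> r < length (k # ks) \<and> dyn_adj A ((k # ks) ! r) (ks ! s)"
        by (intro exI[of _ "Suc r"]) auto
    qed
    then show ?thesis by simp
  qed
  have split: "(\<forall>s<length (k # ks). P s) \<longleftrightarrow> P 0 \<and> (\<forall>s<length ks. P (Suc s))" for P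
    by (auto simp: less_Suc_eq_0_disj)
  show ?case
    unfolding split using head tail Cons.IH by (simp add: conj_commute)
qed

theorem mainTheorem7:
  fixes A :: "'i::finite \<Rightarrow> 'i \<Rightarrow> int"
    and l1 l2 l3 l4 :: "'i \<Rightarrow> int"
    and js :: "'i list"
  assumes "simply_laced_GCM A"
    and "dominant_integral l1" and "dominant_integral l2"
    and "dominant_integral l3" and "dominant_integral l4"
    and "\<forall>i. l1 i + l2 i = l3 i + l4 i"
    and "\<forall>\<alpha>\<in>positive_roots A.
           \<bar>wt_coroot (\<lambda>i. l1 i - l2 i) \<alpha>\<bar> \<le> \<bar>wt_coroot (\<lambda>i. l3 i - l4 i) \<alpha>\<bar>"
    and "distinct js"
    and "connected_type_ADE A (set js)"
    and "\<exists>\<pi>. fword A js (straight l4) = Some \<pi> \<and> mu_dominant A l3 \<pi>"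
  shows "\<exists>\<sigma>. \<sigma> permutes {..<length js} \<and>
           (\<exists>\<pi>'. fword A (map (\<lambda>k. js ! \<sigma> k) [0..<length js]) (straight l2) = Some \<pi>' \<and>
                  mu_dominant A l1 \<pi>')"
proof -
  note SL = assms(1)
  have p1: "\<forall>i. l1 i \<ge> 0" and p2: "\<forall>i. l2 i \<ge> 0" and p3: "\<forall>i. l3 i \<ge> 0" and p4: "\<forall>i. l4 i \<ge> 0"
    using assms(2-5) by (auto simp: dominant_integral_def)
  note dj = assms(8)
  let ?S = "set js"
  let ?adj = "dyn_adj A"
  obtain \<pi> where fw: "fword A js (straight l4) = Some \<pi>" and md: "mu_dominant A l3 \<pi>"
    using assms(10) by blast
  have fwe: "fword A js (straight l4) = (if okF A l4 js then Some (PG A l4 (Gf A l4 js)) else None)"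
    using fword_PG[OF SL p4 dj] by blast
  have ok4: "okF A l4 js" using fw fwe by (auto split: if_splits)
  have \<pi>eq: "\<pi> = PG A l4 (Gf A l4 js)" using fw fwe ok4 by simp
  have nz4: "\<forall>s<length js. l4 (js ! s) = 0 \<longrightarrow> (\<exists>r. s < r \<and> r < length js \<and> ?adj (js ! r) (js ! s))"
    using okF_nth[OF p4] ok4 by blast
  have dm3: "\<forall>s<length js. l3 (js ! s) = 0 \<longrightarrow> (\<exists>r<s. ?adj (js ! r) (js ! s))"
    using mu_dom_iff[OF SL p4 dj ok4 p3] md \<pi>eq by simp
  define \<tau>h where "\<tau>h = (\<lambda>v. int (SOME i. i < length js \<and> js ! i = v))"
  have \<tau>h_nth: "\<tau>h (js ! i) = int i" if "i < length js" for i
  proof -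
    have "(SOME k. k < length js \<and> js ! k = js ! i) = i"
      by (rule some_equality) (use that dj nth_eq_iff_index_eq in auto)
    then show ?thesis by (simp add: \<tau>h_def)
  qed
  have och: "ord_compat \<tau>h js" by (simp add: ord_compat_def \<tau>h_nth)
  have hyp: "\<forall>v\<in>?S. (l4 v = 0 \<longrightarrow> Rn ?adj \<tau>h ?S v) \<and> (l3 v = 0 \<longrightarrow> Ln ?adj \<tau>h ?S v)"
  proof
    fix v assume "v \<in> ?S"
    then obtain s where s: "s < length js" "v = js ! s" by (auto simp: in_set_conv_nth)
    show "(l4 v = 0 \<longrightarrow> Rn ?adj \<tau>h ?S v) \<and> (l3 v = 0 \<longrightarrow> Ln ?adj \<tau>h ?S v)"
      using nz4 dm3 conv_R[OF och s(1), of ?adj] conv_L[OF och s(1), of ?adj] s by auto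
  qed
  obtain rk where forest: "forestP ?adj rk ?S" and rkinj: "inj_on rk ?S"
    using ADE_forest[OF assms(9)] by blast
  have conn: "connT ?adj ?S"
    using assms(9) by (simp add: connected_type_ADE_def connected_nodes_def connT_def)
  have sym: "\<forall>x y. ?adj x y \<longleftrightarrow> ?adj y x" using adj_sym[OF SL] by blast
  have irr: "\<forall>x. \<not> ?adj x x" by (simp add: dyn_adj_def)
  have ne: "?S \<noteq> {}" using assms(9)
    by (auto simp: connected_type_ADE_def diagram_iso_def bij_betw_def)
  have nn: "\<forall>v\<in>?S. l1 v \<ge> 0 \<and> l2 v \<ge> 0 \<and> l3 v \<ge> 0 \<and> l4 v \<ge> 0" using p1 p2 p3 p4 by auto
  have sums: "\<forall>v\<in>?S. l1 v + l2 v = l3 v + l4 v" using assms(6) by auto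
  have roots: "\<forall>T. T \<subseteq> ?S \<longrightarrow> T \<noteq> {} \<longrightarrow> connT ?adj T \<longrightarrow>
                 \<bar>\<Sum>v\<in>T. l1 v - l2 v\<bar> \<le> \<bar>\<Sum>v\<in>T. l3 v - l4 v\<bar>"
  proof (intro allI impI)
    fix T assume T: "T \<subseteq> ?S" "T \<noteq> {}" "connT ?adj T"
    have "ind T \<in> positive_roots A"
      by (rule root_in_pos[OF SL T(2) T(3) forestP_subset[OF forest T(1)] inj_on_subset[OF rkinj T(1)]])
    then have "\<bar>wt_coroot (\<lambda>i. l1 i - l2 i) (ind T)\<bar> \<le> \<bar>wt_coroot (\<lambda>i. l3 i - l4 i) (ind T)\<bar>"
      using assms(7) by blast
    then show "\<bar>\<Sum>v\<in>T. l1 v - l2 v\<bar> \<le> \<bar>\<Sum>v\<in>T. l3 v - l4 v\<bar>" by (simp add: wt_ind)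
  qed
  have tinj: "inj_on \<tau>h ?S" by (rule ord_compat_inj[OF och])
  obtain \<tau>' where t'inj: "inj_on \<tau>' ?S"
    and sol: "\<forall>v\<in>?S. (l2 v = 0 \<longrightarrow> Rn ?adj \<tau>' ?S v) \<and> (l1 v = 0 \<longrightarrow> Ln ?adj \<tau>' ?S v)"
    using comb[OF _ ne sym irr conn forest rkinj nn sums roots tinj hyp] by blast
  define w where "w = sort_key \<tau>' js"
  have setw: "set w = ?S" and dw: "distinct w" and lw: "length w = length js"
    using dj by (simp_all add: w_def length_sort)
  have sw: "sorted (map \<tau>' w)" by (simp add: w_def)
  have ocw: "ord_compat \<tau>' w"
    unfolding ord_compat_def
  proof (intro allI impI)
    fix i j assume i: "i < length w" and j: "j < length w"
    have le: "\<tau>' (w ! a) \<le> \<tau>' (w ! b)" if "a \<le> b" "b < length w" for a b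
      using sorted_nth_mono[OF sw, of a b] that by simp
    have neq: "\<tau>' (w ! a) \<noteq> \<tau>' (w ! b)" if "a \<noteq> b" "a < length w" "b < length w" for a b
    proof
      assume "\<tau>' (w ! a) = \<tau>' (w ! b)"
      moreover have "w ! a \<in> ?S" "w ! b \<in> ?S" using that setw nth_mem by blast+
      ultimately have "w ! a = w ! b" using t'inj by (meson inj_onD)
      then show False using dw that nth_eq_iff_index_eq by blast
    qed
    show "i < j \<longleftrightarrow> \<tau>' (w ! i) < \<tau>' (w ! j)"
    proof
      assume "i < j"
      then show "\<tau>' (w ! i) < \<tau>' (w ! j)" using le[of i j] neq[of i j] j i by fastforce
    next
      assume lt: "\<tau>' (w ! i) < \<tau>' (w ! j)"
      show "i < j"
      proof (rule ccontr)
        assume "\<not> i < j"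
        then have "j \<le> i" by simp
        then show False using le[of j i] i lt by simp
      qed
    qed
  qed
  have nz2: "\<forall>s<length w. l2 (w ! s) = 0 \<longrightarrow> (\<exists>r. s < r \<and> r < length w \<and> ?adj (w ! r) (w ! s))"
  proof (intro allI impI)
    fix s assume s: "s < length w" and z: "l2 (w ! s) = 0"
    have "w ! s \<in> ?S" using s setw nth_mem by blast
    then have "Rn ?adj \<tau>' (set w) (w ! s)" using sol z setw by auto
    then show "\<exists>r. s < r \<and> r < length w \<and> ?adj (w ! r) (w ! s)" using conv_R[OF ocw s] by blast
  qed
  have dm1: "\<forall>s<length w. l1 (w ! s) = 0 \<longrightarrow> (\<exists>r<s. ?adj (w ! r) (w ! s))"
  proof (intro allI impI)
    fix s assume s: "s < length w" and z: "l1 (w ! s) = 0"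
    have "w ! s \<in> ?S" using s setw nth_mem by blast
    then have "Ln ?adj \<tau>' (set w) (w ! s)" using sol z setw by auto
    then show "\<exists>r<s. ?adj (w ! r) (w ! s)" using conv_L[OF ocw s] by blast
  qed
  have ok2: "okF A l2 w" using okF_nth[OF p2] nz2 by blast
  have fw2: "fword A w (straight l2) = Some (PG A l2 (Gf A l2 w))"
    using fword_PG[OF SL p2 dw] ok2 by simp
  have md1: "mu_dominant A l1 (PG A l2 (Gf A l2 w))"
    using mu_dom_iff[OF SL p2 dw ok2 p1] dm1 by blast
  have "mset w = mset js" by (simp add: w_def)
  then obtain p where p: "p permutes {..<length js}" "permute_list p js = w"
    by (rule mset_eq_permutation)
  have "map (\<lambda>k. js ! p k) [0..<length js] = w" using p(2) by (simp add: permute_list_def)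
  then show ?thesis using p(1) fw2 md1 by auto
qed

end
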